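(* Let $({\rm X},{\sf d},{\mbox{m}})$ be a metric measure space, $({\rm Y},{\sf d}_{\rm Y},\bar y)$ a pointed separable ${\sf CAT}(0)$ space, $\Omega\subset{\rm X}$ open and $u\colon\Omega\to{\rm Y}$ a Borel map which is a representative of an element of $L^2(\Omega,{\rm Y}_{\bar y})$. Then ${\sf S}\in L^2(u^*{\rm T}_G{\rm Y},{\mbox{m}}|_\Omega)$ if and only if ${\sf S}$ is the equivalence class, up to ${\mbox{m}}$-a.e. equality, of a Borel section ${\sf T}$ of $u^*{\rm T}_G{\rm Y}$ with $\int_\Omega|{\sf T}_x|^2_{u(x)}\,{\rm d}{\mbox{m}}(x)<\infty$.
   Context: Metric measure space: complete separable metric space with nonnegative nonzero Borel measure finite on bounded sets. ${\sf CAT}(0)$: complete geodesic metric space with ${\sf d}^2(\gamma_t,a)\le(1-t){\sf d}^2(\gamma_0,a)+t{\sf d}^2(\gamma_1,a)-t(1-t){\sf d}^2(\gamma_0,\gamma_1)$ along constant speed geodesics $\gamma\colon[0,1]\to{\rm Y}$; ${\sf G}_y^z$ the unique geodesic from $y$ to $z$. $L^2(\Omega,{\rm Y}_{\bar y})$: Borel essentially separably valued maps with $\int_\Omega{\sf d}^2_{\rm Y}(u,\bar y)\,{\rm d}{\mbox{m}}<\infty$, modulo a.e. equality. Tangent cone ${\rm T}_y{\rm Y}$: completion of constant speed geodesics from $y$ modulo ${\sf d}_y(\gamma,\eta):=\lim_{t\downarrow0}{\sf d}_{\rm Y}(\gamma_t,\eta_t)/t=0$; $\gamma'_0$ the class,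 $\alpha\gamma'_0$ class of $t\mapsto\gamma_{\alpha t}$; $|v|_y={\sf d}_y(v,0_y)$; $\langle v,w\rangle_y=\frac12(|v|_y^2+|w|_y^2-{\sf d}_y^2(v,w))$. Borel structure: ${\rm T}_G{\rm Y}:=\{(y,v):v\in{\rm T}_y{\rm Y}\}$ with the smallest $\sigma$-algebra making $\pi_{\rm Y}$ Borel and $(y,v)\mapsto\langle v,({\sf G}_y^z)'_0\rangle_y$ measurable for all $z\in{\rm Y}$; $u^*{\rm T}_G{\rm Y}:=\{(x,u(x),v):x\in\Omega,v\in{\rm T}_{u(x)}{\rm Y}\}$ with the restriction of $\mathcal B({\rm X})\otimes\mathcal B({\rm T}_G{\rm Y})$; a Borel section is a measurable $x\mapsto(x,u(x),{\sf T}_x)$. $L^2(u^*{\rm T}_G{\rm Y},{\mbox{m}}|_\Omega)$: with ${\sf d}_{L^2}({\sf S}^1,{\sf S}^2)^2:=\int_\Omega{\sf d}^2_{u(x)}({\sf S}^1_x,{\sf S}^2_x)\,{\rm d}{\mbox{m}}$, it is the quotient by ${\sf d}_{L^2}=0$ of the set of sections ${\sf S}$ such that (a) for all $\alpha\ge0$ and Borel essentially separably valued $v\colon\Omega\to{\rm Y}$, $x\mapsto{\sf d}_{u(x)}({\sf S}_x,\alpha({\sf G}_{u(x)}^{v(x)})'_0)$ is Borel; (b) there are $\alpha_n\ge0$ and Borel essentially separably valued $v_n$ with ${\sf S}^n_x:=\alpha_n({\sf G}_{u(x)}^{v_n(x)})'_0$, $\sup_n{\sf d}_{L^2}({\sf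 S}^n,{\sf 0})<\infty$ (${\sf 0}$ the zero section) and ${\sf S}^n_x\to{\sf S}_x$ in ${\rm T}_{u(x)}{\rm Y}$ for every $x\in\Omega$. *)

theory Defs
  imports "HOL-Analysis.Analysis" "HOL-Probability.Probability"
begin

definition mm_space :: "'x::polish_space measure \<Rightarrow> bool" where
  "mm_space m \<longleftrightarrow> sets m = sets borel \<and> emeasure m (space m) \<noteq> 0 \<and>
     (\<forall>B \<in> sets borel. bounded B \<longrightarrow> emeasure m B < \<infinity>)"

definition cs_geodesic :: "(real \<Rightarrow> 'y::metric_space) \<Rightarrow> bool" where
  "cs_geodesic \<gamma> \<longleftrightarrow> (\<forall>s\<in>{0..1}. \<forall>t\<in>{0..1}.
      dist (\<gamma> s) (\<gamma> t) = \<bar>s - t\<bar> * dist (\<gamma> 0) (\<gamma> 1))"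

definition cat0 :: "'y::metric_space itself \<Rightarrow> bool" where
  "cat0 (_ :: 'y itself) \<longleftrightarrow>
     (\<forall>y z :: 'y. \<exists>\<gamma>. cs_geodesic \<gamma> \<and> \<gamma> 0 = y \<and> \<gamma> 1 = z) \<and>
     (\<forall>(\<gamma> :: real \<Rightarrow> 'y) a t. cs_geodesic \<gamma> \<and> t \<in> {0..1} \<longrightarrow>
        (dist (\<gamma> t) a)\<^sup>2 \<le> (1 - t) * (dist (\<gamma> 0) a)\<^sup>2 + t * (dist (\<gamma> 1) a)\<^sup>2
                              - t * (1 - t) * (dist (\<gamma> 0) (\<gamma> 1))\<^sup>2)"

text \<open>The (unique, in a CAT(0) space) geodesic from y to z on [0,1], extended
  constantly outside [0,1] so that it is uniquely determined as a function.\<close>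
definition geod :: "'y::metric_space \<Rightarrow> 'y \<Rightarrow> real \<Rightarrow> 'y" where
  "geod y z = (THE \<gamma>. cs_geodesic \<gamma> \<and> \<gamma> 0 = y \<and> \<gamma> 1 = z \<and>
                     (\<forall>t<0. \<gamma> t = y) \<and> (\<forall>t>1. \<gamma> t = z))"

text \<open>A constant speed geodesic emanating from y (only its germ at 0 matters):
  a curve which is a constant speed geodesic on some interval [0,e], e>0.\<close>
definition geod_from :: "'y::metric_space \<Rightarrow> (real \<Rightarrow> 'y) \<Rightarrow> bool" where
  "geod_from y \<gamma> \<longleftrightarrow> \<gamma> 0 = y \<and> (\<exists>e>0. \<exists>c\<ge>0. \<forall>s\<in>{0..e}. \<forall>t\<in>{0..e}.
      dist (\<gamma> s) (\<gamma> t) = c * \<bar>s - t\<bar>)"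

definition dgerm :: "(real \<Rightarrow> 'y::metric_space) \<Rightarrow> (real \<Rightarrow> 'y) \<Rightarrow> real" where
  "dgerm \<gamma> \<eta> = Lim (at_right 0) (\<lambda>t. dist (\<gamma> t) (\<eta> t) / t)"

text \<open>Elements of the tangent cone T_y Y are represented via the standard
  completion construction: Cauchy sequences (w.r.t. d_y) of geodesics from y;
  two representatives denote the same element iff their tangent distance is 0.\<close>
type_synonym 'y tvec = "nat \<Rightarrow> real \<Rightarrow> 'y"

definition tcone :: "'y::metric_space \<Rightarrow> 'y tvec set" where
  "tcone y = {v. (\<forall>n. geod_from y (v n)) \<and>
      (\<forall>e>0. \<exists>N. \<forall>m\<ge>N. \<forall>n\<ge>N. dgerm (v m) (v n) < e)}"

definition tdist :: "'y::metric_space \<Rightarrow> 'y tvec \<Rightarrow> 'y tvec \<Rightarrow> real" where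
  "tdist y v w = lim (\<lambda>n. dgerm (v n) (w n))"

definition tv_of :: "(real \<Rightarrow> 'y) \<Rightarrow> 'y tvec" where
  "tv_of \<gamma> = (\<lambda>n. \<gamma>)"

text \<open>alpha (G_y^z)'_0 : class of t \<mapsto> G_y^z(alpha t).\<close>
definition tdir :: "real \<Rightarrow> 'y::metric_space \<Rightarrow> 'y \<Rightarrow> 'y tvec" where
  "tdir \<alpha> y z = tv_of (\<lambda>t. geod y z (\<alpha> * t))"

definition tzero :: "'y \<Rightarrow> 'y tvec" where
  "tzero y = tv_of (\<lambda>t. y)"

definition tnorm :: "'y::metric_space \<Rightarrow> 'y tvec \<Rightarrow> real" where
  "tnorm y v = tdist y v (tzero y)"

definition tinner :: "'y::metric_space \<Rightarrow> 'y tvec \<Rightarrow> 'y tvec \<Rightarrow> real" where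
  "tinner y v w = ((tnorm y v)\<^sup>2 + (tnorm y w)\<^sup>2 - (tdist y v w)\<^sup>2) / 2"

definition TG :: "('y::metric_space \<times> 'y tvec) set" where
  "TG = {(y, v). v \<in> tcone y}"

definition TG_measure :: "('y::metric_space \<times> 'y tvec) measure" where
  "TG_measure = sigma TG
     ({fst -` B \<inter> TG | B. B \<in> sets (borel :: 'y measure)} \<union>
      {(\<lambda>(y, v). tinner y v (tdir 1 y z)) -` A \<inter> TG | z A. A \<in> sets (borel :: real measure)})"

definition pullback_set ::
    "('x \<Rightarrow> 'y::metric_space) \<Rightarrow> 'x set \<Rightarrow> ('x \<times> 'y \<times> 'y tvec) set" where
  "pullback_set u \<Omega> = {(x, u x, v) | x v. x \<in> \<Omega> \<and> v \<in> tcone (u x)}"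

definition pullback_measure ::
    "('x::topological_space \<Rightarrow> 'y::metric_space) \<Rightarrow> 'x set \<Rightarrow> ('x \<times> 'y \<times> 'y tvec) measure" where
  "pullback_measure u \<Omega> = restrict_space (borel \<Otimes>\<^sub>M TG_measure) (pullback_set u \<Omega>)"

definition borel_section ::
    "('x::topological_space \<Rightarrow> 'y::metric_space) \<Rightarrow> 'x set \<Rightarrow> ('x \<Rightarrow> 'y tvec) \<Rightarrow> bool" where
  "borel_section u \<Omega> T \<longleftrightarrow>
     (\<lambda>x. (x, u x, T x)) \<in> measurable (restrict_space borel \<Omega>) (pullback_measure u \<Omega>)"

definition ess_sep_valued :: "'x measure \<Rightarrow> 'x set \<Rightarrow> ('x \<Rightarrow> 'y::metric_space) \<Rightarrow> bool" where
  "ess_sep_valued m \<Omega> v \<longleftrightarrow> (\<exists>N \<in> null_sets m.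
      separable_space (subtopology euclidean (v ` (\<Omega> - N))))"

definition borel_esv :: "'x::topological_space measure \<Rightarrow> 'x set \<Rightarrow> ('x \<Rightarrow> 'y::metric_space) \<Rightarrow> bool" where
  "borel_esv m \<Omega> v \<longleftrightarrow> v \<in> borel_measurable (restrict_space borel \<Omega>) \<and> ess_sep_valued m \<Omega> v"

definition L2_map :: "'x::topological_space measure \<Rightarrow> 'x set \<Rightarrow> 'y::metric_space \<Rightarrow> ('x \<Rightarrow> 'y) \<Rightarrow> bool" where
  "L2_map m \<Omega> ybar u \<longleftrightarrow> borel_esv m \<Omega> u \<and>
     (\<integral>\<^sup>+ x. ennreal ((dist (u x) ybar)\<^sup>2) \<partial>(restrict_space m \<Omega>)) < \<infinity>"

definition dL2sq :: "'x measure \<Rightarrow> 'x set \<Rightarrow> ('x \<Rightarrow> 'y::metric_space) \<Rightarrow>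
    ('x \<Rightarrow> 'y tvec) \<Rightarrow> ('x \<Rightarrow> 'y tvec) \<Rightarrow> ennreal" where
  "dL2sq m \<Omega> u S1 S2 = (\<integral>\<^sup>+ x. ennreal ((tdist (u x) (S1 x) (S2 x))\<^sup>2) \<partial>(restrict_space m \<Omega>))"

definition L2_section_rep :: "'x::topological_space measure \<Rightarrow> 'x set \<Rightarrow> ('x \<Rightarrow> 'y::metric_space) \<Rightarrow>
    ('x \<Rightarrow> 'y tvec) \<Rightarrow> bool" where
  "L2_section_rep m \<Omega> u S \<longleftrightarrow>
     (\<forall>x\<in>\<Omega>. S x \<in> tcone (u x)) \<and>
     (\<forall>\<alpha>\<ge>0. \<forall>v. borel_esv m \<Omega> v \<longrightarrow>
        (\<lambda>x. tdist (u x) (S x) (tdir \<alpha> (u x) (v x))) \<in> borel_measurable (restrict_space borel \<Omega>)) \<and>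
     (\<exists>(\<alpha> :: nat \<Rightarrow> real) (vs :: nat \<Rightarrow> 'x \<Rightarrow> 'y).
        (\<forall>n. \<alpha> n \<ge> 0 \<and> borel_esv m \<Omega> (vs n)) \<and>
        (SUP n. dL2sq m \<Omega> u (\<lambda>x. tdir (\<alpha> n) (u x) (vs n x)) (\<lambda>x. tzero (u x))) < \<infinity> \<and>
        (\<forall>x\<in>\<Omega>. (\<lambda>n. tdist (u x) (tdir (\<alpha> n) (u x) (vs n x)) (S x)) \<longlonglongrightarrow> 0))"

definition ae_eq_section :: "'x measure \<Rightarrow> 'x set \<Rightarrow> ('x \<Rightarrow> 'y::metric_space) \<Rightarrow>
    ('x \<Rightarrow> 'y tvec) \<Rightarrow> ('x \<Rightarrow> 'y tvec) \<Rightarrow> bool" where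
  "ae_eq_section m \<Omega> u S T \<longleftrightarrow> (AE x in restrict_space m \<Omega>. tdist (u x) (S x) (T x) = 0)"

end

theory Submission
  imports Defs
begin

lemma cat0_CN:
  assumes "cat0 TYPE('y::metric_space)" "cs_geodesic (\<gamma>::real \<Rightarrow> 'y)" "t \<in> {0..1}"
  shows "(dist (\<gamma> t) a)\<^sup>2 \<le> (1 - t) * (dist (\<gamma> 0) a)\<^sup>2 + t * (dist (\<gamma> 1) a)\<^sup>2
                              - t * (1 - t) * (dist (\<gamma> 0) (\<gamma> 1))\<^sup>2"
  using assms unfolding cat0_def by blast

lemma cat0_ex:
  assumes "cat0 TYPE('y::metric_space)"
  shows "\<exists>\<gamma>. cs_geodesic \<gamma> \<and> \<gamma> 0 = (y::'y) \<and> \<gamma> 1 = z"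
  using assms unfolding cat0_def by blast

lemma cs_geodesic_dist:
  assumes "cs_geodesic \<gamma>" "s \<in> {0..1}" "t \<in> {0..1}"
  shows "dist (\<gamma> s) (\<gamma> t) = \<bar>s - t\<bar> * dist (\<gamma> 0) (\<gamma> 1)"
  using assms unfolding cs_geodesic_def by blast

lemma cs_geodesic_unique:
  assumes c: "cat0 TYPE('y::metric_space)" and g: "cs_geodesic (\<gamma>::real \<Rightarrow> 'y)"
    and h: "cs_geodesic \<eta>" and e0: "\<gamma> 0 = \<eta> 0" and e1: "\<gamma> 1 = \<eta> 1" and t: "t \<in> {0..1}"
  shows "\<gamma> t = \<eta> t"
proof -
  define D where "D = dist (\<eta> 0) (\<eta> 1)"
  have d1: "dist (\<gamma> 0) (\<eta> t) = t * D"
    using cs_geodesic_dist[OF h, of 0 t] t e0 unfolding D_def by auto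
  have d2: "dist (\<gamma> 1) (\<eta> t) = (1 - t) * D"
    using cs_geodesic_dist[OF h, of 1 t] t e1 unfolding D_def by auto
  have d3: "dist (\<gamma> 0) (\<gamma> 1) = D" using e0 e1 D_def by simp
  have "(dist (\<gamma> t) (\<eta> t))\<^sup>2 \<le> (1 - t) * (t * D)\<^sup>2 + t * ((1 - t) * D)\<^sup>2 - t * (1 - t) * D\<^sup>2"
    using cat0_CN[OF c g t, of "\<eta> t"] d1 d2 d3 by simp
  also have "\<dots> = 0" by (simp add: algebra_simps power2_eq_square)
  finally show ?thesis by simp
qed

definition clampg :: "(real \<Rightarrow> 'y) \<Rightarrow> real \<Rightarrow> 'y" where
  "clampg \<gamma> t = \<gamma> (max 0 (min 1 t))"

lemma geod_props:
  assumes c: "cat0 TYPE('y::metric_space)"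
  shows "cs_geodesic (geod y z) \<and> geod y z 0 = (y::'y) \<and> geod y z 1 = z \<and>
         (\<forall>t<0. geod y z t = y) \<and> (\<forall>t>1. geod y z t = z)"
proof -
  obtain \<gamma> where g: "cs_geodesic \<gamma>" "\<gamma> 0 = y" "\<gamma> 1 = z" using cat0_ex[OF c] by blast
  define \<delta> where "\<delta> = (\<lambda>t. \<gamma> (max 0 (min 1 t)))"
  have eq: "\<delta> t = \<gamma> t" if "t \<in> {0..1}" for t using that unfolding \<delta>_def by simp
  have cs: "cs_geodesic \<delta>" unfolding cs_geodesic_def
  proof (intro ballI)
    fix s t :: real assume "s \<in> {0..1}" "t \<in> {0..1}"
    then show "dist (\<delta> s) (\<delta> t) = \<bar>s - t\<bar> * dist (\<delta> 0) (\<delta> 1)"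
      using eq[of s] eq[of t] eq[of 0] eq[of 1] cs_geodesic_dist[OF g(1), of s t] by simp
  qed
  have d0: "\<delta> 0 = y" "\<delta> 1 = z" using eq[of 0] eq[of 1] g by auto
  have dl: "\<forall>t<0. \<delta> t = y" using g(2) unfolding \<delta>_def by simp
  have dr: "\<forall>t>1. \<delta> t = z" using g(3) unfolding \<delta>_def by simp
  let ?P = "\<lambda>\<gamma>. cs_geodesic \<gamma> \<and> \<gamma> 0 = y \<and> \<gamma> 1 = z \<and> (\<forall>t<0. \<gamma> t = y) \<and> (\<forall>t>1. \<gamma> t = z)"
  have P: "?P \<delta>" using cs d0 dl dr by blast
  have U: "\<xi> = \<delta>" if xi: "?P \<xi>" for \<xi>
  proof
    fix t
    show "\<xi> t = \<delta> t"
    proof (cases "t < 0")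
      case True then show ?thesis using xi dl by simp
    next
      case f1: False
      show ?thesis
      proof (cases "t > 1")
        case True then show ?thesis using xi dr by simp
      next
        case False
        then have "t \<in> {0..1}" using f1 by simp
        moreover have "cs_geodesic \<xi>" "\<xi> 0 = \<delta> 0" "\<xi> 1 = \<delta> 1" using xi d0 by auto
        ultimately show ?thesis using cs_geodesic_unique[OF c _ cs, of \<xi> t] by blast
      qed
    qed
  qed
  have "geod y z = \<delta>" unfolding geod_def by (rule the_equality[where P = ?P, OF P U])
  then show ?thesis using P by simp
qed

lemma geod_dist:
  assumes c: "cat0 TYPE('y::metric_space)" and "s \<in> {0..1}" "t \<in> {0..1}"
  shows "dist (geod y z s) (geod y z t) = \<bar>s - t\<bar> * dist (y::'y) z"
  using cs_geodesic_dist[of "geod y z" s t] geod_props[OF c, of y z] assms by auto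

lemma geod_0[simp]: "cat0 TYPE('y::metric_space) \<Longrightarrow> geod (y::'y) z 0 = y"
  using geod_props by blast

lemma geod_unique:
  assumes c: "cat0 TYPE('y::metric_space)" and "cs_geodesic \<gamma>" "\<gamma> 0 = (y::'y)" "\<gamma> 1 = z"
    and "t \<in> {0..1}"
  shows "geod y z t = \<gamma> t"
  using cs_geodesic_unique[OF c, of "geod y z" \<gamma> t] geod_props[OF c, of y z] assms by auto

lemma geod_self:
  assumes c: "cat0 TYPE('y::metric_space)"
  shows "geod (y::'y) y t = y"
proof (cases "t \<in> {0..1}")
  case True
  then show ?thesis using geod_dist[OF c True, of 0 y y] geod_0[OF c, of y y] by simp
next
  case False
  then show ?thesis using geod_props[OF c, of y y] by (auto simp: not_le)
qed

definition germ :: "'y::metric_space \<Rightarrow> (real \<Rightarrow> 'y) \<Rightarrow> real \<Rightarrow> real \<Rightarrow> bool" where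
  "germ y \<gamma> a e \<longleftrightarrow> \<gamma> 0 = y \<and> 0 < e \<and> 0 \<le> a \<and>
     (\<forall>s\<in>{0..e}. \<forall>t\<in>{0..e}. dist (\<gamma> s) (\<gamma> t) = a * \<bar>s - t\<bar>)"

lemma geod_from_germ: "geod_from y \<gamma> \<Longrightarrow> \<exists>a e. germ y \<gamma> a e"
  unfolding geod_from_def germ_def by (metis mult.commute)

lemma germ_geod_from: "germ y \<gamma> a e \<Longrightarrow> geod_from y \<gamma>"
  unfolding geod_from_def germ_def by (metis mult.commute)

lemma germ_dist: "germ y \<gamma> a e \<Longrightarrow> s \<in> {0..e} \<Longrightarrow> t \<in> {0..e} \<Longrightarrow> dist (\<gamma> s) (\<gamma> t) = a * \<bar>s - t\<bar>"
  unfolding germ_def by blast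

lemma germ_0: "germ y \<gamma> a e \<Longrightarrow> \<gamma> 0 = y"
  unfolding germ_def by blast

lemma germ_pos: "germ y \<gamma> a e \<Longrightarrow> 0 < e \<and> 0 \<le> a"
  unfolding germ_def by blast

lemma germ_dist0: "germ y \<gamma> a e \<Longrightarrow> t \<in> {0..e} \<Longrightarrow> dist y (\<gamma> t) = a * t"
  using germ_dist[of y \<gamma> a e 0 t] germ_0[of y \<gamma> a e] germ_pos[of y \<gamma> a e] by auto

lemma germ_smaller: "germ y \<gamma> a e \<Longrightarrow> 0 < e' \<Longrightarrow> e' \<le> e \<Longrightarrow> germ y \<gamma> a e'"
  unfolding germ_def by auto

lemma germ_scale:
  assumes g: "germ y \<eta> b e" and al: "0 \<le> \<alpha>"
  shows "germ y (\<lambda>t. \<eta> (\<alpha> * t)) (\<alpha> * b) (e / (\<alpha> + 1))"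
  unfolding germ_def
proof (intro conjI ballI)
  show "\<eta> (\<alpha> * 0) = y" using germ_0[OF g] by simp
  show "0 < e / (\<alpha> + 1)" using germ_pos[OF g] al by simp
  show "0 \<le> \<alpha> * b" using germ_pos[OF g] al by simp
  fix s t assume s: "s \<in> {0..e / (\<alpha> + 1)}" and t: "t \<in> {0..e / (\<alpha> + 1)}"
  have ee: "\<alpha> * (e / (\<alpha> + 1)) \<le> e" using germ_pos[OF g] al by (simp add: field_simps)
  have "\<alpha> * s \<le> \<alpha> * (e / (\<alpha> + 1))" using s al by (intro mult_left_mono) auto
  then have s': "\<alpha> * s \<in> {0..e}" using s al ee by auto
  have "\<alpha> * t \<le> \<alpha> * (e / (\<alpha> + 1))" using t al by (intro mult_left_mono) auto
  then have t': "\<alpha> * t \<in> {0..e}" using t al ee by auto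
  have "dist (\<eta> (\<alpha> * s)) (\<eta> (\<alpha> * t)) = b * \<bar>\<alpha> * s - \<alpha> * t\<bar>" using germ_dist[OF g s' t'] .
  also have "\<dots> = \<alpha> * b * \<bar>s - t\<bar>" using al
    by (simp add: right_diff_distrib[symmetric] abs_mult)
  finally show "dist (\<eta> (\<alpha> * s)) (\<eta> (\<alpha> * t)) = \<alpha> * b * \<bar>s - t\<bar>" .
qed

lemma germ_geod: "cat0 TYPE('y::metric_space) \<Longrightarrow> germ (y::'y) (geod y z) (dist y z) 1"
  unfolding germ_def using geod_dist[of s t y z for s t] by (auto simp: mult.commute)

lemma germ_const: "germ y (\<lambda>t. y) 0 1"
  unfolding germ_def by auto

lemma germ_rescale_cs:
  assumes g: "germ y \<gamma> a e" and h: "0 < h" "h \<le> e"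
  shows "cs_geodesic (\<lambda>r. \<gamma> (h * r))"
  unfolding cs_geodesic_def
proof (intro ballI)
  fix s t :: real assume s: "s \<in> {0..1}" and t: "t \<in> {0..1}"
  have "h * s \<le> h * 1" using s h by (intro mult_left_mono) auto
  then have "h * s \<le> e" using h by linarith
  then have s': "h * s \<in> {0..e}" using s h by auto
  have "h * t \<le> h * 1" using t h by (intro mult_left_mono) auto
  then have "h * t \<le> e" using h by linarith
  then have t': "h * t \<in> {0..e}" using t h by auto
  have "dist (\<gamma> (h * s)) (\<gamma> (h * t)) = a * \<bar>h * s - h * t\<bar>" using germ_dist[OF g s' t'] .
  also have "\<dots> = a * h * \<bar>s - t\<bar>" using h by (simp add: right_diff_distrib[symmetric] abs_mult)
  finally have 1: "dist (\<gamma> (h * s)) (\<gamma> (h * t)) = a * h * \<bar>s - t\<bar>" .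
  have "dist (\<gamma> (h * 0)) (\<gamma> (h * 1)) = a * h"
    using germ_dist[OF g, of 0 h] h germ_pos[OF g] by auto
  then show "dist (\<gamma> (h * s)) (\<gamma> (h * t)) = \<bar>s - t\<bar> * dist (\<gamma> (h * 0)) (\<gamma> (h * 1))"
    using 1 by simp
qed

lemma germ_CN:
  assumes c: "cat0 TYPE('y::metric_space)" and g: "germ (y::'y) \<gamma> a e"
    and s: "0 < s" "s \<le> s'" "s' \<le> e"
  shows "s' * (dist (\<gamma> s) q)\<^sup>2 \<le> (s' - s) * (dist y q)\<^sup>2 + s * (dist (\<gamma> s') q)\<^sup>2
            - s * (s' - s) * a\<^sup>2 * s'"
proof -
  define l where "l = s / s'"
  have sp: "0 < s'" using s by simp
  have l: "l \<in> {0..1}" using s unfolding l_def by auto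
  have cs: "cs_geodesic (\<lambda>r. \<gamma> (s' * r))" using germ_rescale_cs[OF g sp s(3)] .
  have CN: "(dist (\<gamma> (s' * l)) q)\<^sup>2 \<le> (1 - l) * (dist (\<gamma> (s' * 0)) q)\<^sup>2 + l * (dist (\<gamma> (s' * 1)) q)\<^sup>2
                              - l * (1 - l) * (dist (\<gamma> (s' * 0)) (\<gamma> (s' * 1)))\<^sup>2"
    using cat0_CN[OF c cs l, of q] by simp
  have e1: "s' * l = s" using sp unfolding l_def by simp
  have e2: "\<gamma> (s' * 0) = y" using germ_0[OF g] by simp
  have e3: "dist (\<gamma> (s' * 0)) (\<gamma> (s' * 1)) = a * s'" using germ_dist0[OF g, of s'] e2 s by simp
  have "(dist (\<gamma> s) q)\<^sup>2 \<le> (1 - l) * (dist y q)\<^sup>2 + l * (dist (\<gamma> s') q)\<^sup>2 - l * (1 - l) * (a * s')\<^sup>2"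
    using CN e1 e2 e3 by simp
  then have "s' * (dist (\<gamma> s) q)\<^sup>2 \<le> s' * ((1 - l) * (dist y q)\<^sup>2 + l * (dist (\<gamma> s') q)\<^sup>2 - l * (1 - l) * (a * s')\<^sup>2)"
    using sp by (simp add: mult_left_mono)
  also have "\<dots> = (s' - s) * (dist y q)\<^sup>2 + s * (dist (\<gamma> s') q)\<^sup>2 - s * (s' - s) * a\<^sup>2 * s'"
    using sp unfolding l_def by (simp add: field_simps power2_eq_square)
  finally show ?thesis .
qed

definition Fg :: "(real \<Rightarrow> 'y::metric_space) \<Rightarrow> (real \<Rightarrow> 'y) \<Rightarrow> real \<Rightarrow> real \<Rightarrow> real \<Rightarrow> real \<Rightarrow> real" where
  "Fg \<gamma> \<eta> a b s t = (a\<^sup>2 * s\<^sup>2 + b\<^sup>2 * t\<^sup>2 - (dist (\<gamma> s) (\<eta> t))\<^sup>2) / (2 * s * t)"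

lemma Fg_sym: "Fg \<gamma> \<eta> a b s t = Fg \<eta> \<gamma> b a t s"
  unfolding Fg_def by (simp add: dist_commute algebra_simps)

lemma Fg_mono1:
  assumes c: "cat0 TYPE('y::metric_space)" and g: "germ (y::'y) \<gamma> a e1" and h: "germ y \<eta> b e2"
    and s: "0 < s" "s \<le> s'" "s' \<le> e1" and t: "0 < t" "t \<le> e2"
  shows "Fg \<gamma> \<eta> a b s' t \<le> Fg \<gamma> \<eta> a b s t"
proof -
  define D where "D = dist (\<gamma> s) (\<eta> t)"
  define D' where "D' = dist (\<gamma> s') (\<eta> t)"
  have dq: "dist y (\<eta> t) = b * t" using germ_dist0[OF h, of t] t by simp
  have CN: "s' * D\<^sup>2 \<le> (s' - s) * (b * t)\<^sup>2 + s * D'\<^sup>2 - s * (s' - s) * a\<^sup>2 * s'"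
    using germ_CN[OF c g s, of "\<eta> t"] dq unfolding D_def D'_def by simp
  have eq: "s' * (a\<^sup>2 * s\<^sup>2 + b\<^sup>2 * t\<^sup>2 - D\<^sup>2) - s * (a\<^sup>2 * s'\<^sup>2 + b\<^sup>2 * t\<^sup>2 - D'\<^sup>2)
      = ((s' - s) * (b * t)\<^sup>2 + s * D'\<^sup>2 - s * (s' - s) * a\<^sup>2 * s') - s' * D\<^sup>2"
    by (simp add: algebra_simps power2_eq_square)
  have key: "s * (a\<^sup>2 * s'\<^sup>2 + b\<^sup>2 * t\<^sup>2 - D'\<^sup>2) \<le> s' * (a\<^sup>2 * s\<^sup>2 + b\<^sup>2 * t\<^sup>2 - D\<^sup>2)"
    using CN eq by linarith
  have sp: "0 < s'" using s by simp
  have "Fg \<gamma> \<eta> a b s' t = (s * (a\<^sup>2 * s'\<^sup>2 + b\<^sup>2 * t\<^sup>2 - D'\<^sup>2)) / (2 * s * s' * t)"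
    unfolding Fg_def D'_def using s t by (simp add: field_simps)
  also have "\<dots> \<le> (s' * (a\<^sup>2 * s\<^sup>2 + b\<^sup>2 * t\<^sup>2 - D\<^sup>2)) / (2 * s * s' * t)"
    using key s t sp by (intro divide_right_mono) auto
  also have "\<dots> = Fg \<gamma> \<eta> a b s t"
    unfolding Fg_def D_def using s t sp by (simp add: field_simps)
  finally show ?thesis .
qed

lemma Fg_mono2:
  assumes c: "cat0 TYPE('y::metric_space)" and g: "germ (y::'y) \<gamma> a e1" and h: "germ y \<eta> b e2"
    and s: "0 < s" "s \<le> e1" and t: "0 < t" "t \<le> t'" "t' \<le> e2"
  shows "Fg \<gamma> \<eta> a b s t' \<le> Fg \<gamma> \<eta> a b s t"
  using Fg_mono1[OF c h g t s] Fg_sym[of \<gamma> \<eta> a b s t] Fg_sym[of \<gamma> \<eta> a b s t'] by simp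

lemma Fg_bound:
  assumes g: "germ (y::'y::metric_space) \<gamma> a e1" and h: "germ y \<eta> b e2"
    and s: "0 < s" "s \<le> e1" and t: "0 < t" "t \<le> e2"
  shows "Fg \<gamma> \<eta> a b s t \<le> a * b"
proof -
  define D where "D = dist (\<gamma> s) (\<eta> t)"
  have d1: "dist y (\<gamma> s) = a * s" using germ_dist0[OF g, of s] s by simp
  have d2: "dist y (\<eta> t) = b * t" using germ_dist0[OF h, of t] t by simp
  have "dist y (\<gamma> s) \<le> dist y (\<eta> t) + D" unfolding D_def by (metis dist_commute dist_triangle)
  moreover have "dist y (\<eta> t) \<le> dist y (\<gamma> s) + D" unfolding D_def by (metis dist_commute dist_triangle)
  ultimately have "\<bar>a * s - b * t\<bar> \<le> D" using d1 d2 by linarith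
  then have "(a * s - b * t)\<^sup>2 \<le> D\<^sup>2"
    by (metis abs_ge_zero power2_abs power_mono)
  then have "a\<^sup>2 * s\<^sup>2 + b\<^sup>2 * t\<^sup>2 - D\<^sup>2 \<le> (a * b) * (2 * s * t)"
    by (simp add: algebra_simps power2_eq_square)
  then show ?thesis unfolding Fg_def D_def[symmetric] using s t
    by (simp add: divide_le_eq)
qed

lemma Fg_lower:
  assumes c: "cat0 TYPE('y::metric_space)" and g: "germ (y::'y) \<gamma> a e1" and h: "germ y \<eta> b e2"
    and "0 < s" "s \<le> m" "0 < t" "t \<le> m" "m \<le> e1" "m \<le> e2"
  shows "Fg \<gamma> \<eta> a b m m \<le> Fg \<gamma> \<eta> a b s t"
proof -
  have "Fg \<gamma> \<eta> a b m t \<le> Fg \<gamma> \<eta> a b s t" using Fg_mono1[OF c g h] assms by simp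
  moreover have "Fg \<gamma> \<eta> a b m m \<le> Fg \<gamma> \<eta> a b m t" using Fg_mono2[OF c g h] assms by simp
  ultimately show ?thesis by simp
qed

lemma Fg_upper:
  assumes c: "cat0 TYPE('y::metric_space)" and g: "germ (y::'y) \<gamma> a e1" and h: "germ y \<eta> b e2"
    and "0 < s" "s \<le> e1" "0 < t" "t \<le> e2"
  shows "Fg \<gamma> \<eta> a b s t \<le> Fg \<gamma> \<eta> a b (min s t) (min s t)"
proof -
  have "Fg \<gamma> \<eta> a b s t \<le> Fg \<gamma> \<eta> a b (min s t) t" using Fg_mono1[OF c g h] assms by simp
  moreover have "Fg \<gamma> \<eta> a b (min s t) t \<le> Fg \<gamma> \<eta> a b (min s t) (min s t)"
    using Fg_mono2[OF c g h] assms by simp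
  ultimately show ?thesis by simp
qed

lemma Fg_lim:
  assumes c: "cat0 TYPE('y::metric_space)" and g: "germ (y::'y) \<gamma> a e1" and h: "germ y \<eta> b e2"
    and al: "0 < \<alpha>"
  defines "e \<equiv> min e1 e2"
  defines "L \<equiv> (SUP r\<in>{0<..e}. Fg \<gamma> \<eta> a b r r)"
  shows "((\<lambda>t. Fg \<gamma> \<eta> a b t (\<alpha> * t)) \<longlongrightarrow> L) (at_right 0)" and "L \<le> a * b"
proof -
  have ep: "0 < e" using germ_pos[OF g] germ_pos[OF h] unfolding e_def by simp
  have ne: "{0<..e} \<noteq> {}" using ep by auto
  have bd: "Fg \<gamma> \<eta> a b r r \<le> a * b" if "r \<in> {0<..e}" for r
    using Fg_bound[OF g h, of r r] that unfolding e_def by auto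
  have bdd: "bdd_above ((\<lambda>r. Fg \<gamma> \<eta> a b r r) ` {0<..e})"
    using bd by (intro bdd_aboveI2) auto
  show "L \<le> a * b" unfolding L_def using bd ne by (intro cSUP_least) auto
  show "((\<lambda>t. Fg \<gamma> \<eta> a b t (\<alpha> * t)) \<longlongrightarrow> L) (at_right 0)"
    unfolding order_tendsto_iff
  proof (intro conjI allI impI)
    fix l assume "l < L"
    then obtain r0 where r0: "r0 \<in> {0<..e}" "l < Fg \<gamma> \<eta> a b r0 r0"
      unfolding L_def using less_cSUP_iff[OF ne bdd] by blast
    show "\<forall>\<^sub>F t in at_right 0. l < Fg \<gamma> \<eta> a b t (\<alpha> * t)"
      unfolding eventually_at_right_field
    proof (intro exI[of _ "min r0 (r0 / \<alpha>)"] conjI allI impI)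
      show "0 < min r0 (r0 / \<alpha>)" using r0 al by auto
      fix t :: real assume t: "0 < t" "t < min r0 (r0 / \<alpha>)"
      define m where "m = max t (\<alpha> * t)"
      have at: "\<alpha> * t < r0" using t al by (simp add: field_simps)
      have m: "0 < m" "m \<le> r0" "t \<le> m" "\<alpha> * t \<le> m" using t at unfolding m_def by auto
      have "Fg \<gamma> \<eta> a b r0 r0 \<le> Fg \<gamma> \<eta> a b m m"
        using Fg_lower[OF c g h, of m r0 m] m r0 unfolding e_def by auto
      also have "\<dots> \<le> Fg \<gamma> \<eta> a b t (\<alpha> * t)"
        using Fg_lower[OF c g h, of t m "\<alpha> * t"] m r0 t al unfolding e_def by auto
      finally show "l < Fg \<gamma> \<eta> a b t (\<alpha> * t)" using r0 by simp
    qed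
  next
    fix u assume "L < u"
    show "\<forall>\<^sub>F t in at_right 0. Fg \<gamma> \<eta> a b t (\<alpha> * t) < u"
      unfolding eventually_at_right_field
    proof (intro exI[of _ "min e (e / \<alpha>)"] conjI allI impI)
      show "0 < min e (e / \<alpha>)" using ep al by auto
      fix t :: real assume t: "0 < t" "t < min e (e / \<alpha>)"
      have at: "\<alpha> * t < e" using t al by (simp add: field_simps)
      define m where "m = min t (\<alpha> * t)"
      have m: "m \<in> {0<..e}" using t at al unfolding m_def by auto
      have "Fg \<gamma> \<eta> a b t (\<alpha> * t) \<le> Fg \<gamma> \<eta> a b m m"
        using Fg_upper[OF c g h, of t "\<alpha> * t"] t at al unfolding m_def e_def by auto
      also have "\<dots> \<le> L" unfolding L_def using m bdd by (intro cSUP_upper) auto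
      finally show "Fg \<gamma> \<eta> a b t (\<alpha> * t) < u" using \<open>L < u\<close> by simp
    qed
  qed
qed

lemma arith_aux1: "0 < t \<Longrightarrow> 0 < (\<alpha>::real) \<Longrightarrow> a\<^sup>2 + \<alpha>\<^sup>2 * b\<^sup>2 - 2 * \<alpha> * ((a\<^sup>2 * t\<^sup>2 + b\<^sup>2 * (\<alpha> * t)\<^sup>2 - D\<^sup>2) / (2 * t * (\<alpha> * t))) = D\<^sup>2 / t\<^sup>2"
  by (simp add: field_simps power2_eq_square)

lemma arith_aux2: "0 < (r::real) \<Longrightarrow> (D / r)\<^sup>2 = a\<^sup>2 + b\<^sup>2 - 2 * ((a\<^sup>2 * r\<^sup>2 + b\<^sup>2 * r\<^sup>2 - D\<^sup>2) / (2 * r * r))"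
  by (simp add: field_simps power2_eq_square)

lemma germ_main:
  assumes c: "cat0 TYPE('y::metric_space)" and g: "germ (y::'y) \<gamma> a e1" and h: "germ y \<eta> b e2"
  shows "\<exists>L. L \<le> a * b \<and> (\<forall>\<alpha>\<ge>0. ((\<lambda>t. dist (\<gamma> t) (\<eta> (\<alpha> * t)) / t)
            \<longlongrightarrow> sqrt (a\<^sup>2 + \<alpha>\<^sup>2 * b\<^sup>2 - 2 * \<alpha> * L)) (at_right 0))"
proof -
  define e where "e = min e1 e2"
  define L where "L = (SUP r\<in>{0<..e}. Fg \<gamma> \<eta> a b r r)"
  have ep: "0 < e" using germ_pos[OF g] germ_pos[OF h] unfolding e_def by simp
  have Lb: "L \<le> a * b" using Fg_lim(2)[OF c g h, of 1] unfolding L_def e_def by simp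
  have "((\<lambda>t. dist (\<gamma> t) (\<eta> (\<alpha> * t)) / t) \<longlongrightarrow> sqrt (a\<^sup>2 + \<alpha>\<^sup>2 * b\<^sup>2 - 2 * \<alpha> * L)) (at_right 0)"
    if al: "0 \<le> \<alpha>" for \<alpha>
  proof (cases "\<alpha> = 0")
    case True
    have ev: "\<forall>\<^sub>F t in at_right 0. a = dist (\<gamma> t) (\<eta> (\<alpha> * t)) / t"
      unfolding eventually_at_right_field
    proof (intro exI[of _ e1] conjI allI impI)
      show "0 < e1" using germ_pos[OF g] by simp
      fix t :: real assume t: "0 < t" "t < e1"
      have "dist (\<gamma> t) (\<eta> (\<alpha> * t)) = a * t"
        using germ_dist0[OF g, of t] t germ_0[OF h] True by (simp add: dist_commute)
      then show "a = dist (\<gamma> t) (\<eta> (\<alpha> * t)) / t" using t by simp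
    qed
    have "sqrt (a\<^sup>2 + \<alpha>\<^sup>2 * b\<^sup>2 - 2 * \<alpha> * L) = a" using True germ_pos[OF g] by simp
    then show ?thesis using tendsto_cong[OF ev, THEN iffD1, OF tendsto_const] by simp
  next
    case False
    then have ap: "0 < \<alpha>" using al by simp
    have lim: "((\<lambda>t. Fg \<gamma> \<eta> a b t (\<alpha> * t)) \<longlongrightarrow> L) (at_right 0)"
      using Fg_lim(1)[OF c g h ap] unfolding L_def e_def by simp
    have ev: "\<forall>\<^sub>F t in at_right 0. sqrt (a\<^sup>2 + \<alpha>\<^sup>2 * b\<^sup>2 - 2 * \<alpha> * Fg \<gamma> \<eta> a b t (\<alpha> * t))
                 = dist (\<gamma> t) (\<eta> (\<alpha> * t)) / t"
      unfolding eventually_at_right_field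
    proof (intro exI[of _ 1] conjI allI impI)
      fix t :: real assume t: "0 < t" "t < 1"
      have "a\<^sup>2 + \<alpha>\<^sup>2 * b\<^sup>2 - 2 * \<alpha> * Fg \<gamma> \<eta> a b t (\<alpha> * t) = (dist (\<gamma> t) (\<eta> (\<alpha> * t)))\<^sup>2 / t\<^sup>2"
        unfolding Fg_def using arith_aux1[OF t(1) ap] .
      then show "sqrt (a\<^sup>2 + \<alpha>\<^sup>2 * b\<^sup>2 - 2 * \<alpha> * Fg \<gamma> \<eta> a b t (\<alpha> * t)) = dist (\<gamma> t) (\<eta> (\<alpha> * t)) / t"
      proof -
        have "sqrt ((dist (\<gamma> t) (\<eta> (\<alpha> * t)))\<^sup>2 / t\<^sup>2) = dist (\<gamma> t) (\<eta> (\<alpha> * t)) / t"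
          using t by (simp add: real_sqrt_divide)
        then show ?thesis using \<open>a\<^sup>2 + \<alpha>\<^sup>2 * b\<^sup>2 - 2 * \<alpha> * Fg \<gamma> \<eta> a b t (\<alpha> * t) = (dist (\<gamma> t) (\<eta> (\<alpha> * t)))\<^sup>2 / t\<^sup>2\<close> by simp
      qed
    qed (simp)
    have "((\<lambda>t. sqrt (a\<^sup>2 + \<alpha>\<^sup>2 * b\<^sup>2 - 2 * \<alpha> * Fg \<gamma> \<eta> a b t (\<alpha> * t)))
           \<longlongrightarrow> sqrt (a\<^sup>2 + \<alpha>\<^sup>2 * b\<^sup>2 - 2 * \<alpha> * L)) (at_right 0)"
      by (intro tendsto_real_sqrt tendsto_diff tendsto_mult tendsto_const lim)
    then show ?thesis using tendsto_cong[OF ev, THEN iffD1] by blast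
  qed
  then show ?thesis using Lb by blast
qed

lemma dgerm_tendsto_germ:
  assumes c: "cat0 TYPE('y::metric_space)" and g: "germ (y::'y) \<gamma> a e1" and h: "germ y \<eta> b e2"
  shows "((\<lambda>t. dist (\<gamma> t) (\<eta> t) / t) \<longlongrightarrow> dgerm \<gamma> \<eta>) (at_right 0)"
proof -
  obtain L where T: "\<forall>\<alpha>\<ge>0. ((\<lambda>t. dist (\<gamma> t) (\<eta> (\<alpha> * t)) / t)
            \<longlongrightarrow> sqrt (a\<^sup>2 + \<alpha>\<^sup>2 * b\<^sup>2 - 2 * \<alpha> * L)) (at_right 0)"
    using germ_main[OF c g h] by blast
  have "((\<lambda>t. dist (\<gamma> t) (\<eta> (1 * t)) / t) \<longlongrightarrow> sqrt (a\<^sup>2 + 1\<^sup>2 * b\<^sup>2 - 2 * 1 * L)) (at_right 0)"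
    using T[rule_format, of 1] by simp
  then have "((\<lambda>t. dist (\<gamma> t) (\<eta> t) / t) \<longlongrightarrow> sqrt (a\<^sup>2 + 1\<^sup>2 * b\<^sup>2 - 2 * 1 * L)) (at_right 0)"
    by simp
  then show ?thesis unfolding dgerm_def by (simp add: tendsto_Lim)
qed

lemma dgerm_tendsto:
  assumes c: "cat0 TYPE('y::metric_space)" and g: "geod_from (y::'y) \<gamma>" and h: "geod_from y \<eta>"
  shows "((\<lambda>t. dist (\<gamma> t) (\<eta> t) / t) \<longlongrightarrow> dgerm \<gamma> \<eta>) (at_right 0)"
  using dgerm_tendsto_germ[OF c] geod_from_germ[OF g] geod_from_germ[OF h] by blast

lemma dgerm_scale:
  assumes c: "cat0 TYPE('y::metric_space)" and g: "germ (y::'y) \<gamma> a e1" and h: "germ y \<eta> b e2"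
    and al: "0 \<le> \<alpha>"
  shows "(dgerm \<gamma> (\<lambda>t. \<eta> (\<alpha> * t)))\<^sup>2 = a\<^sup>2 + \<alpha>\<^sup>2 * b\<^sup>2 - \<alpha> * (a\<^sup>2 + b\<^sup>2 - (dgerm \<gamma> \<eta>)\<^sup>2)"
proof -
  obtain L where Lb: "L \<le> a * b" and T: "\<forall>\<alpha>\<ge>0. ((\<lambda>t. dist (\<gamma> t) (\<eta> (\<alpha> * t)) / t)
            \<longlongrightarrow> sqrt (a\<^sup>2 + \<alpha>\<^sup>2 * b\<^sup>2 - 2 * \<alpha> * L)) (at_right 0)"
    using germ_main[OF c g h] by blast
  have nn: "0 \<le> a\<^sup>2 + \<beta>\<^sup>2 * b\<^sup>2 - 2 * \<beta> * L" if "0 \<le> \<beta>" for \<beta>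
  proof -
    have "2 * \<beta> * L \<le> 2 * \<beta> * (a * b)" using that Lb by (simp add: mult_left_mono)
    moreover have "0 \<le> (a - \<beta> * b)\<^sup>2" by simp
    ultimately show ?thesis by (simp add: algebra_simps power2_eq_square)
  qed
  have d: "dgerm \<gamma> (\<lambda>t. \<eta> (\<beta> * t)) = sqrt (a\<^sup>2 + \<beta>\<^sup>2 * b\<^sup>2 - 2 * \<beta> * L)" if "0 \<le> \<beta>" for \<beta>
  proof -
    have "((\<lambda>t. dist (\<gamma> t) (\<eta> (\<beta> * t)) / t) \<longlongrightarrow> sqrt (a\<^sup>2 + \<beta>\<^sup>2 * b\<^sup>2 - 2 * \<beta> * L)) (at_right 0)"
      using T that by blast
    then show ?thesis unfolding dgerm_def by (simp add: tendsto_Lim)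
  qed
  have d1: "dgerm \<gamma> \<eta> = sqrt (a\<^sup>2 + b\<^sup>2 - 2 * L)" using d[of 1] by simp
  have s1: "(dgerm \<gamma> (\<lambda>t. \<eta> (\<alpha> * t)))\<^sup>2 = a\<^sup>2 + \<alpha>\<^sup>2 * b\<^sup>2 - 2 * \<alpha> * L"
    using d[OF al] nn[OF al] by simp
  have s2: "(dgerm \<gamma> \<eta>)\<^sup>2 = a\<^sup>2 + b\<^sup>2 - 2 * L" using d1 nn[of 1] by simp
  show ?thesis unfolding s1 s2 by (simp add: algebra_simps)
qed

lemma dgerm_zero:
  assumes g: "germ y \<gamma> a e"
  shows "dgerm \<gamma> (\<lambda>t. y) = a"
proof -
  have ev: "\<forall>\<^sub>F t in at_right 0. a = dist (\<gamma> t) y / t"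
    unfolding eventually_at_right_field
  proof (intro exI[of _ e] conjI allI impI)
    show "0 < e" using germ_pos[OF g] by simp
    fix t :: real assume t: "0 < t" "t < e"
    have "dist (\<gamma> t) y = a * t" using germ_dist0[OF g, of t] t by (simp add: dist_commute)
    then show "a = dist (\<gamma> t) y / t" using t by simp
  qed
  have "((\<lambda>t. dist (\<gamma> t) y / t) \<longlongrightarrow> a) (at_right 0)" using tendsto_cong[OF ev, THEN iffD1, OF tendsto_const] .
  then show ?thesis unfolding dgerm_def using tendsto_Lim[OF trivial_limit_at_right_real] by blast
qed

lemma dgerm_sym: "dgerm \<gamma> \<eta> = dgerm \<eta> \<gamma>"
  unfolding dgerm_def by (simp add: dist_commute)

lemma dgerm_nonneg:
  assumes c: "cat0 TYPE('y::metric_space)" and g: "geod_from (y::'y) \<gamma>" and h: "geod_from y \<eta>"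
  shows "0 \<le> dgerm \<gamma> \<eta>"
proof (rule tendsto_lowerbound[OF dgerm_tendsto[OF c g h]])
  show "\<forall>\<^sub>F t in at_right 0. 0 \<le> dist (\<gamma> t) (\<eta> t) / t"
    unfolding eventually_at_right_field by (intro exI[of _ 1]) auto
qed simp

lemma dgerm_triangle:
  assumes c: "cat0 TYPE('y::metric_space)" and g: "geod_from (y::'y) \<gamma>" and h: "geod_from y \<eta>"
    and k: "geod_from y \<zeta>"
  shows "dgerm \<gamma> \<zeta> \<le> dgerm \<gamma> \<eta> + dgerm \<eta> \<zeta>"
proof (rule tendsto_le[OF trivial_limit_at_right_real _ dgerm_tendsto[OF c g k]])
  show "((\<lambda>t. dist (\<gamma> t) (\<eta> t) / t + dist (\<eta> t) (\<zeta> t) / t) \<longlongrightarrow> dgerm \<gamma> \<eta> + dgerm \<eta> \<zeta>) (at_right 0)"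
    by (intro tendsto_add dgerm_tendsto[OF c g h] dgerm_tendsto[OF c h k])
  show "\<forall>\<^sub>F t in at_right 0. dist (\<gamma> t) (\<zeta> t) / t \<le> dist (\<gamma> t) (\<eta> t) / t + dist (\<eta> t) (\<zeta> t) / t"
    unfolding eventually_at_right_field
  proof (intro exI[of _ 1] conjI allI impI)
    fix t :: real assume t: "0 < t" "t < 1"
    have "dist (\<gamma> t) (\<zeta> t) \<le> dist (\<gamma> t) (\<eta> t) + dist (\<eta> t) (\<zeta> t)" by (rule dist_triangle)
    then show "dist (\<gamma> t) (\<zeta> t) / t \<le> dist (\<gamma> t) (\<eta> t) / t + dist (\<eta> t) (\<zeta> t) / t"
      using t by (simp add: add_divide_distrib[symmetric] divide_right_mono)
  qed simp
qed

lemma dgerm_eq0: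
  assumes "\<forall>\<^sub>F t in at_right 0. \<gamma> t = \<eta> t"
  shows "dgerm \<gamma> \<eta> = 0"
proof -
  have ev: "\<forall>\<^sub>F t in at_right 0. 0 = dist (\<gamma> t) (\<eta> t) / t"
    using assms by (rule eventually_mono) simp
  have "((\<lambda>t. dist (\<gamma> t) (\<eta> t) / t) \<longlongrightarrow> 0) (at_right 0)" using tendsto_cong[OF ev, THEN iffD1, OF tendsto_const] .
  then show ?thesis unfolding dgerm_def using tendsto_Lim[OF trivial_limit_at_right_real] by blast
qed

lemma dgerm_le:
  assumes c: "cat0 TYPE('y::metric_space)" and g: "geod_from (y::'y) \<gamma>" and h: "geod_from y \<eta>"
    and hp: "0 < h" and B: "\<And>t. 0 < t \<Longrightarrow> t \<le> h \<Longrightarrow> dist (\<gamma> t) (\<eta> t) / t \<le> B"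
  shows "dgerm \<gamma> \<eta> \<le> B"
proof (rule tendsto_upperbound[OF dgerm_tendsto[OF c g h]])
  show "\<forall>\<^sub>F t in at_right 0. dist (\<gamma> t) (\<eta> t) / t \<le> B"
    unfolding eventually_at_right_field using hp B by (intro exI[of _ h]) auto
qed simp

lemma busemann:
  assumes c: "cat0 TYPE('y::metric_space)" and g: "germ (y::'y) \<gamma> a e1" and h: "germ y \<eta> b e2"
    and s: "0 < s" "s \<le> t" "t \<le> e1" "t \<le> e2"
  shows "dist (\<gamma> s) (\<eta> s) / s \<le> dist (\<gamma> t) (\<eta> t) / t"
proof -
  have eq: "(dist (\<gamma> r) (\<eta> r) / r)\<^sup>2 = a\<^sup>2 + b\<^sup>2 - 2 * Fg \<gamma> \<eta> a b r r" if "0 < r" for r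
    unfolding Fg_def using arith_aux2[OF that] .
  have F: "Fg \<gamma> \<eta> a b t t \<le> Fg \<gamma> \<eta> a b s s" using Fg_lower[OF c g h, of s t s] s by linarith
  have e1: "(dist (\<gamma> s) (\<eta> s) / s)\<^sup>2 = a\<^sup>2 + b\<^sup>2 - 2 * Fg \<gamma> \<eta> a b s s" using eq s by blast
  have e2: "(dist (\<gamma> t) (\<eta> t) / t)\<^sup>2 = a\<^sup>2 + b\<^sup>2 - 2 * Fg \<gamma> \<eta> a b t t" using eq s by simp
  have "(dist (\<gamma> s) (\<eta> s) / s)\<^sup>2 \<le> (dist (\<gamma> t) (\<eta> t) / t)\<^sup>2" unfolding e1 e2 using F by linarith
  moreover have "0 \<le> dist (\<gamma> t) (\<eta> t) / t" using s by simp
  ultimately show ?thesis by (rule power2_le_imp_le)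
qed

lemma tcone_geod_from: "v \<in> tcone y \<Longrightarrow> geod_from y (v n)"
  unfolding tcone_def by blast

lemma tcone_cauchy: "v \<in> tcone y \<Longrightarrow> 0 < e \<Longrightarrow> \<exists>N. \<forall>m\<ge>N. \<forall>n\<ge>N. dgerm (v m) (v n) < e"
  unfolding tcone_def by blast

lemma dgerm_self: "dgerm \<gamma> \<gamma> = 0"
  by (rule dgerm_eq0) simp

lemma tv_of_tcone: "geod_from y \<gamma> \<Longrightarrow> tv_of \<gamma> \<in> tcone y"
  unfolding tcone_def tv_of_def by (auto simp: dgerm_self)

lemma tdist_tendsto:
  assumes c: "cat0 TYPE('y::metric_space)" and v: "v \<in> tcone (y::'y)" and w: "w \<in> tcone y"
  shows "(\<lambda>n. dgerm (v n) (w n)) \<longlonglongrightarrow> tdist y v w"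
proof -
  have gv: "\<And>k. geod_from y (v k)" using v by (rule tcone_geod_from)
  have gw: "\<And>k. geod_from y (w k)" using w by (rule tcone_geod_from)
  have "Cauchy (\<lambda>n. dgerm (v n) (w n))"
  proof (rule metric_CauchyI)
    fix \<epsilon> :: real assume ep: "0 < \<epsilon>"
    obtain N1 where N1: "\<forall>m\<ge>N1. \<forall>n\<ge>N1. dgerm (v m) (v n) < \<epsilon> / 2"
      using tcone_cauchy[OF v, of "\<epsilon> / 2"] ep by auto
    obtain N2 where N2: "\<forall>m\<ge>N2. \<forall>n\<ge>N2. dgerm (w m) (w n) < \<epsilon> / 2"
      using tcone_cauchy[OF w, of "\<epsilon> / 2"] ep by auto
    show "\<exists>M. \<forall>m\<ge>M. \<forall>n\<ge>M. dist (dgerm (v m) (w m)) (dgerm (v n) (w n)) < \<epsilon>"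
    proof (intro exI[of _ "max N1 N2"] allI impI)
      fix m n assume m: "max N1 N2 \<le> m" and n: "max N1 N2 \<le> n"
      have t1: "dgerm (v m) (w m) \<le> dgerm (v m) (v n) + dgerm (v n) (w m)"
        by (rule dgerm_triangle[OF c gv gv gw])
      have t2: "dgerm (v n) (w m) \<le> dgerm (v n) (w n) + dgerm (w n) (w m)"
        by (rule dgerm_triangle[OF c gv gw gw])
      have t3: "dgerm (v n) (w n) \<le> dgerm (v n) (v m) + dgerm (v m) (w n)"
        by (rule dgerm_triangle[OF c gv gv gw])
      have t4: "dgerm (v m) (w n) \<le> dgerm (v m) (w m) + dgerm (w m) (w n)"
        by (rule dgerm_triangle[OF c gv gw gw])
      have s1: "dgerm (v n) (v m) = dgerm (v m) (v n)" by (rule dgerm_sym)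
      have s2: "dgerm (w n) (w m) = dgerm (w m) (w n)" by (rule dgerm_sym)
      have b1: "dgerm (v m) (v n) < \<epsilon> / 2" using N1 m n by auto
      have b2: "dgerm (w m) (w n) < \<epsilon> / 2" using N2 m n by auto
      show "dist (dgerm (v m) (w m)) (dgerm (v n) (w n)) < \<epsilon>"
        unfolding dist_real_def using t1 t2 t3 t4 s1 s2 b1 b2 by linarith
    qed
  qed
  then have "convergent (\<lambda>n. dgerm (v n) (w n))" using Cauchy_convergent_iff by blast
  then show ?thesis unfolding tdist_def using convergent_LIMSEQ_iff by blast
qed

lemma tdist_sym: "tdist y v w = tdist y w v"
  unfolding tdist_def by (simp add: dgerm_sym)

lemma tdist_nonneg:
  assumes c: "cat0 TYPE('y::metric_space)" and v: "v \<in> tcone (y::'y)" and w: "w \<in> tcone y"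
  shows "0 \<le> tdist y v w"
  using tdist_tendsto[OF c v w]
  by (rule LIMSEQ_le_const) (use dgerm_nonneg[OF c tcone_geod_from[OF v] tcone_geod_from[OF w]] in auto)

lemma tdist_triangle:
  assumes c: "cat0 TYPE('y::metric_space)" and u: "u \<in> tcone (y::'y)" and v: "v \<in> tcone y"
    and w: "w \<in> tcone y"
  shows "tdist y u w \<le> tdist y u v + tdist y v w"
proof (rule LIMSEQ_le[OF tdist_tendsto[OF c u w]])
  show "(\<lambda>n. dgerm (u n) (v n) + dgerm (v n) (w n)) \<longlonglongrightarrow> tdist y u v + tdist y v w"
    by (intro tendsto_add tdist_tendsto[OF c u v] tdist_tendsto[OF c v w])
  show "\<exists>N. \<forall>n\<ge>N. dgerm (u n) (w n) \<le> dgerm (u n) (v n) + dgerm (v n) (w n)"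
    using dgerm_triangle[OF c tcone_geod_from[OF u] tcone_geod_from[OF v] tcone_geod_from[OF w]] by blast
qed

lemma tdist_tv_of: "tdist y (tv_of \<gamma>) (tv_of \<eta>) = dgerm \<gamma> \<eta>"
  unfolding tdist_def tv_of_def by (rule limI) simp

lemma tdist_self:
  assumes c: "cat0 TYPE('y::metric_space)" and v: "v \<in> tcone (y::'y)"
  shows "tdist y v v = 0"
  unfolding tdist_def by (simp add: dgerm_self)

lemma tdir_germ:
  assumes c: "cat0 TYPE('y::metric_space)" and al: "0 \<le> \<alpha>"
  shows "germ (y::'y) (\<lambda>t. geod y z (\<alpha> * t)) (\<alpha> * dist y z) (1 / (\<alpha> + 1))"
  using germ_scale[OF germ_geod[OF c] al] by simp

lemma tdir_tcone:
  assumes c: "cat0 TYPE('y::metric_space)" and al: "0 \<le> \<alpha>"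
  shows "tdir \<alpha> (y::'y) z \<in> tcone y"
  unfolding tdir_def by (rule tv_of_tcone, rule germ_geod_from, rule tdir_germ[OF c al])

lemma tzero_tcone: "tzero y \<in> tcone y"
  unfolding tzero_def by (rule tv_of_tcone, rule germ_geod_from, rule germ_const)

lemma tnorm_tdir:
  assumes c: "cat0 TYPE('y::metric_space)" and al: "0 \<le> \<alpha>"
  shows "tnorm (y::'y) (tdir \<alpha> y z) = \<alpha> * dist y z"
  unfolding tnorm_def tdir_def tzero_def tdist_tv_of
  using dgerm_zero[OF tdir_germ[OF c al]] .

lemma tdir_zero:
  assumes c: "cat0 TYPE('y::metric_space)"
  shows "tdir 0 (y::'y) z = tzero y"
  unfolding tdir_def tzero_def using geod_0[OF c] by simp

lemma tdir_self:
  assumes c: "cat0 TYPE('y::metric_space)"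
  shows "tdir \<alpha> (y::'y) y = tzero y"
  unfolding tdir_def tzero_def using geod_self[OF c] by simp

lemma tnorm_tendsto:
  assumes c: "cat0 TYPE('y::metric_space)" and v: "v \<in> tcone (y::'y)"
  shows "(\<lambda>n. dgerm (v n) (\<lambda>t. y)) \<longlonglongrightarrow> tnorm y v"
  using tdist_tendsto[OF c v tzero_tcone] unfolding tnorm_def by (simp add: tzero_def tv_of_def)

lemma tdist_tdir_sq:
  assumes c: "cat0 TYPE('y::metric_space)" and v: "v \<in> tcone (y::'y)" and al: "0 \<le> \<alpha>"
  shows "(tdist y v (tdir \<alpha> y z))\<^sup>2 = (tnorm y v)\<^sup>2 + \<alpha>\<^sup>2 * (dist y z)\<^sup>2
            - \<alpha> * ((tnorm y v)\<^sup>2 + (dist y z)\<^sup>2 - (tdist y v (tdir 1 y z))\<^sup>2)"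
proof -
  have eq: "(dgerm (v n) (\<lambda>t. geod y z (\<alpha> * t)))\<^sup>2 = (dgerm (v n) (\<lambda>t. y))\<^sup>2 + \<alpha>\<^sup>2 * (dist y z)\<^sup>2
      - \<alpha> * ((dgerm (v n) (\<lambda>t. y))\<^sup>2 + (dist y z)\<^sup>2 - (dgerm (v n) (geod y z))\<^sup>2)" for n
  proof -
    obtain a e where g: "germ y (v n) a e" using geod_from_germ[OF tcone_geod_from[OF v]] by blast
    have "dgerm (v n) (\<lambda>t. y) = a" by (rule dgerm_zero[OF g])
    then show ?thesis using dgerm_scale[OF c g germ_geod[OF c] al, of z] by simp
  qed
  have l1: "(\<lambda>n. dgerm (v n) (\<lambda>t. geod y z (\<alpha> * t))) \<longlonglongrightarrow> tdist y v (tdir \<alpha> y z)"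
    using tdist_tendsto[OF c v tdir_tcone[OF c al]] unfolding tdir_def tv_of_def by simp
  have l2: "(\<lambda>n. dgerm (v n) (geod y z)) \<longlonglongrightarrow> tdist y v (tdir 1 y z)"
    using tdist_tendsto[OF c v tdir_tcone[OF c, of 1]] unfolding tdir_def tv_of_def by simp
  have l3: "(\<lambda>n. dgerm (v n) (\<lambda>t. y)) \<longlonglongrightarrow> tnorm y v" by (rule tnorm_tendsto[OF c v])
  have A: "(\<lambda>n. (dgerm (v n) (\<lambda>t. geod y z (\<alpha> * t)))\<^sup>2) \<longlonglongrightarrow> (tdist y v (tdir \<alpha> y z))\<^sup>2"
    by (intro tendsto_power l1)
  have B: "(\<lambda>n. (dgerm (v n) (\<lambda>t. y))\<^sup>2 + \<alpha>\<^sup>2 * (dist y z)\<^sup>2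
      - \<alpha> * ((dgerm (v n) (\<lambda>t. y))\<^sup>2 + (dist y z)\<^sup>2 - (dgerm (v n) (geod y z))\<^sup>2))
      \<longlonglongrightarrow> (tnorm y v)\<^sup>2 + \<alpha>\<^sup>2 * (dist y z)\<^sup>2
            - \<alpha> * ((tnorm y v)\<^sup>2 + (dist y z)\<^sup>2 - (tdist y v (tdir 1 y z))\<^sup>2)"
    by (intro tendsto_intros l2 l3)
  show ?thesis using LIMSEQ_unique[OF A] B unfolding eq by blast
qed

lemma tinner_tdir1:
  assumes c: "cat0 TYPE('y::metric_space)"
  shows "tinner (y::'y) v (tdir 1 y z) = ((tnorm y v)\<^sup>2 + (dist y z)\<^sup>2 - (tdist y v (tdir 1 y z))\<^sup>2) / 2"
  unfolding tinner_def using tnorm_tdir[OF c, of 1 y z] by simp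

lemma tdist_tdir_formula:
  assumes c: "cat0 TYPE('y::metric_space)" and v: "v \<in> tcone (y::'y)" and al: "0 \<le> \<alpha>"
  shows "(tdist y v (tdir \<alpha> y z))\<^sup>2 = (tnorm y v)\<^sup>2 + \<alpha>\<^sup>2 * (dist y z)\<^sup>2 - 2 * \<alpha> * tinner y v (tdir 1 y z)"
proof -
  have "2 * \<alpha> * tinner y v (tdir 1 y z) = \<alpha> * ((tnorm y v)\<^sup>2 + (dist y z)\<^sup>2 - (tdist y v (tdir 1 y z))\<^sup>2)"
    unfolding tinner_tdir1[OF c] by simp
  then show ?thesis unfolding tdist_tdir_sq[OF c v al] by linarith
qed

lemma tdist_approx:
  assumes c: "cat0 TYPE('y::metric_space)" and v: "v \<in> tcone (y::'y)" and ep: "0 < \<epsilon>"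
  shows "\<exists>j. tdist y v (tv_of (v j)) < \<epsilon>"
proof -
  obtain N where N: "\<forall>m\<ge>N. \<forall>n\<ge>N. dgerm (v m) (v n) < \<epsilon> / 2"
    using tcone_cauchy[OF v, of "\<epsilon> / 2"] ep by auto
  have l: "(\<lambda>n. dgerm (v n) (v N)) \<longlonglongrightarrow> tdist y v (tv_of (v N))"
    using tdist_tendsto[OF c v tv_of_tcone[OF tcone_geod_from[OF v]]] unfolding tv_of_def by simp
  have N': "\<forall>n\<ge>N. dgerm (v n) (v N) \<le> \<epsilon> / 2" using N by (meson less_imp_le order_refl)
  have "tdist y v (tv_of (v N)) \<le> \<epsilon> / 2"
    using l by (rule LIMSEQ_le_const2) (use N' in blast)
  then show ?thesis using ep by (intro exI[of _ N]) simp
qed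

lemma geod_rescale:
  assumes c: "cat0 TYPE('y::metric_space)" and g: "germ (y::'y) \<gamma> a e" and h: "0 < h" "h \<le> e"
    and t: "t \<in> {0..h}"
  shows "geod y (\<gamma> h) (t / h) = \<gamma> t"
proof -
  have cs: "cs_geodesic (\<lambda>r. \<gamma> (h * r))" by (rule germ_rescale_cs[OF g h])
  have r: "t / h \<in> {0..1}" using t h by auto
  have "geod y (\<gamma> h) (t / h) = \<gamma> (h * (t / h))"
    using geod_unique[OF c cs _ _ r] germ_0[OF g] by simp
  then show ?thesis using h by simp
qed

lemma tdir_busemann:
  assumes c: "cat0 TYPE('y::metric_space)" and al: "0 \<le> \<alpha>"
  shows "tdist (y::'y) (tdir \<alpha> y w) (tdir \<alpha> y z) \<le> \<alpha> * dist w z"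
proof (cases "\<alpha> = 0")
  case True
  then show ?thesis unfolding tdir_def tdist_tv_of using geod_0[OF c] by (simp add: dgerm_self)
next
  case False
  then have ap: "0 < \<alpha>" using al by simp
  have gw: "germ y (geod y w) (dist y w) 1" and gz: "germ y (geod y z) (dist y z) 1"
    using germ_geod[OF c] by auto
  show ?thesis unfolding tdir_def tdist_tv_of
  proof (rule dgerm_le[OF c germ_geod_from[OF tdir_germ[OF c al]] germ_geod_from[OF tdir_germ[OF c al]]])
    show "0 < 1 / \<alpha>" using ap by simp
    fix t :: real assume t: "0 < t" "t \<le> 1 / \<alpha>"
    have at: "0 < \<alpha> * t" "\<alpha> * t \<le> 1" using t ap by (auto simp: field_simps)
    have "dist (geod y w (\<alpha> * t)) (geod y z (\<alpha> * t)) / (\<alpha> * t) \<le> dist (geod y w 1) (geod y z 1) / 1"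
      using busemann[OF c gw gz at] by simp
    also have "\<dots> = dist w z" using geod_props[OF c, of y w] geod_props[OF c, of y z] by simp
    finally have "dist (geod y w (\<alpha> * t)) (geod y z (\<alpha> * t)) / (\<alpha> * t) \<le> dist w z" .
    then have "dist (geod y w (\<alpha> * t)) (geod y z (\<alpha> * t)) / t \<le> \<alpha> * dist w z"
      using ap t by (simp add: field_simps)
    then show "dist (geod y w (\<alpha> * t)) (geod y z (\<alpha> * t)) / t \<le> \<alpha> * dist w z" .
  qed
qed

lemma tcone_density:
  assumes c: "cat0 TYPE('y::metric_space)" and v: "v \<in> tcone (y::'y)"
    and dense: "\<And>x \<epsilon>. 0 < \<epsilon> \<Longrightarrow> \<exists>k. dist (zs k) x < \<epsilon>" and ep: "0 < \<epsilon>"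
  shows "\<exists>N. \<forall>n\<ge>N. \<exists>k. tdist y v (tdir (real n) y (zs k)) < \<epsilon>"
proof -
  obtain j where j: "tdist y v (tv_of (v j)) < \<epsilon> / 2" using tdist_approx[OF c v, of "\<epsilon> / 2"] ep by auto
  obtain a e where g: "germ y (v j) a e" using geod_from_germ[OF tcone_geod_from[OF v]] by blast
  have ep0: "0 < e" using germ_pos[OF g] by simp
  define N where "N = nat \<lceil>1 / e\<rceil> + 1"
  show ?thesis
  proof (intro exI[of _ N] allI impI)
    fix n assume n: "N \<le> n"
    have "1 / e \<le> real (nat \<lceil>1 / e\<rceil>)" by (rule real_nat_ceiling_ge)
    moreover have "real (nat \<lceil>1 / e\<rceil>) + 1 \<le> real n" using n unfolding N_def by linarith
    ultimately have ne: "1 / e < real n" by linarith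
    have "0 < 1 / e" using ep0 by simp
    then have np: "0 < real n" using ne by linarith
    define h where "h = 1 / real n"
    have hp: "0 < h" unfolding h_def using np by simp
    have he: "h \<le> e" unfolding h_def using ne ep0 np by (simp add: field_simps)
    define w where "w = v j h"
    have z0: "tdist y (tv_of (v j)) (tdir (real n) y w) = 0"
      unfolding tdir_def tdist_tv_of
    proof (rule dgerm_eq0)
      show "\<forall>\<^sub>F t in at_right 0. v j t = geod y w (real n * t)"
        unfolding eventually_at_right_field
      proof (intro exI[of _ h] conjI allI impI)
        show "0 < h" using hp .
        fix t :: real assume t: "0 < t" "t < h"
        have "geod y (v j h) (t / h) = v j t" using geod_rescale[OF c g hp he, of t] t by simp
        moreover have "t / h = real n * t" unfolding h_def by simp
        ultimately show "v j t = geod y w (real n * t)" unfolding w_def by simp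
      qed
    qed
    have ep2: "0 < \<epsilon> / (2 * real n)" using ep np by simp
    obtain k where k: "dist (zs k) w < \<epsilon> / (2 * real n)" using dense[OF ep2] by blast
    have b: "tdist y (tdir (real n) y w) (tdir (real n) y (zs k)) \<le> real n * dist w (zs k)"
      using tdir_busemann[OF c, of "real n"] by simp
    have "real n * dist w (zs k) < real n * (\<epsilon> / (2 * real n))"
      using mult_strict_left_mono[OF k np] by (simp add: dist_commute)
    also have "\<dots> = \<epsilon> / 2" using np by simp
    finally have b2: "tdist y (tdir (real n) y w) (tdir (real n) y (zs k)) < \<epsilon> / 2" using b by linarith
    have m1: "tv_of (v j) \<in> tcone y" by (rule tv_of_tcone[OF tcone_geod_from[OF v]])
    have m2: "tdir (real n) y w \<in> tcone y" by (rule tdir_tcone[OF c]) simp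
    have m3: "tdir (real n) y (zs k) \<in> tcone y" by (rule tdir_tcone[OF c]) simp
    have t1: "tdist y v (tdir (real n) y (zs k)) \<le> tdist y v (tv_of (v j)) + tdist y (tv_of (v j)) (tdir (real n) y (zs k))"
      by (rule tdist_triangle[OF c v m1 m3])
    have t2: "tdist y (tv_of (v j)) (tdir (real n) y (zs k)) \<le> tdist y (tv_of (v j)) (tdir (real n) y w) + tdist y (tdir (real n) y w) (tdir (real n) y (zs k))"
      by (rule tdist_triangle[OF c m1 m2 m3])
    have "tdist y v (tdir (real n) y (zs k)) < \<epsilon>" using t1 t2 j z0 b2 by linarith
    then show "\<exists>k. tdist y v (tdir (real n) y (zs k)) < \<epsilon>" by blast
  qed
qed

lemma tdist_tdir1_lip:
  assumes c: "cat0 TYPE('y::metric_space)" and v: "v \<in> tcone (y::'y)"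
  shows "\<bar>tdist y v (tdir 1 y z) - tdist y v (tdir 1 y w)\<bar> \<le> dist z w"
proof -
  have m1: "tdir 1 y z \<in> tcone y" and m2: "tdir 1 y w \<in> tcone y" using tdir_tcone[OF c] by auto
  have "tdist y v (tdir 1 y z) \<le> tdist y v (tdir 1 y w) + tdist y (tdir 1 y w) (tdir 1 y z)"
    by (rule tdist_triangle[OF c v m2 m1])
  moreover have "tdist y v (tdir 1 y w) \<le> tdist y v (tdir 1 y z) + tdist y (tdir 1 y z) (tdir 1 y w)"
    by (rule tdist_triangle[OF c v m1 m2])
  moreover have "tdist y (tdir 1 y w) (tdir 1 y z) \<le> dist z w"
    using tdir_busemann[OF c, of 1 y w z] by (simp add: dist_commute)
  moreover have "tdist y (tdir 1 y z) (tdir 1 y w) \<le> dist z w"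
    using tdir_busemann[OF c, of 1 y z w] by simp
  ultimately show ?thesis by linarith
qed

lemma tinner_tdir1_tendsto:
  assumes c: "cat0 TYPE('y::metric_space)" and v: "v \<in> tcone (y::'y)" and z: "zk \<longlonglongrightarrow> z"
  shows "(\<lambda>k. tinner y v (tdir 1 y (zk k))) \<longlonglongrightarrow> tinner y v (tdir 1 y z)"
proof -
  have d0: "(\<lambda>k. dist (zk k) z) \<longlonglongrightarrow> 0" using tendsto_dist_iff[THEN iffD1, OF z] .
  have "(\<lambda>k. tdist y v (tdir 1 y (zk k)) - tdist y v (tdir 1 y z)) \<longlonglongrightarrow> 0"
  proof (rule Lim_null_comparison[OF _ d0])
    show "\<forall>\<^sub>F k in sequentially. norm (tdist y v (tdir 1 y (zk k)) - tdist y v (tdir 1 y z)) \<le> dist (zk k) z"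
      using tdist_tdir1_lip[OF c v] by (intro always_eventually allI) simp
  qed
  then have l1: "(\<lambda>k. tdist y v (tdir 1 y (zk k))) \<longlonglongrightarrow> tdist y v (tdir 1 y z)"
    by (rule LIM_zero_cancel)
  have l2: "(\<lambda>k. dist y (zk k)) \<longlonglongrightarrow> dist y z" by (rule tendsto_dist[OF tendsto_const z])
  show ?thesis unfolding tinner_tdir1[OF c]
    by (intro tendsto_divide tendsto_diff tendsto_add tendsto_power tendsto_const l1 l2) simp
qed

lemma dense_seq_ex:
  "\<exists>zs :: nat \<Rightarrow> 'y::{metric_space,second_countable_topology}. \<forall>x \<epsilon>. 0 < \<epsilon> \<longrightarrow> (\<exists>k. dist (zs k) x < \<epsilon>)"
proof -
  obtain D :: "'y set" where D: "countable D" "\<forall>X. open X \<longrightarrow> X \<noteq> {} \<longrightarrow> (\<exists>d\<in>D. d \<in> X)"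
    using countable_dense_exists by blast
  have "D \<noteq> {}" using D(2)[rule_format, of UNIV] by auto
  show ?thesis
  proof (intro exI[of _ "from_nat_into D"] allI impI)
    fix x :: 'y and \<epsilon> :: real assume "0 < \<epsilon>"
    then obtain d where d: "d \<in> D" "d \<in> ball x \<epsilon>" using D(2)[rule_format, of "ball x \<epsilon>"] by auto
    have "from_nat_into D (to_nat_on D d) = d" using D(1) d(1) by simp
    then show "\<exists>k. dist (from_nat_into D k) x < \<epsilon>" using d(2) by (metis dist_commute mem_ball)
  qed
qed

lemma second_countable_euclidean: "second_countable (euclidean :: 'y::second_countable_topology topology)"
proof -
  obtain B :: "'y set set" where B: "countable B" "topological_basis B" using ex_countable_basis by blast
  show ?thesis unfolding second_countable_def
  proof (intro exI[of _ B] conjI ballI allI impI)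
    show "countable B" by (rule B(1))
    fix V assume "V \<in> B" then show "openin euclidean V" using B(2) by (simp add: topological_basis_open)
  next
    fix U and x :: 'y assume "openin euclidean U \<and> x \<in> U"
    then have "open U" "x \<in> U" by auto
    then show "\<exists>V\<in>B. x \<in> V \<and> V \<subseteq> U" using topological_basisE[OF B(2)] by metis
  qed
qed

lemma ess_sep_trivial: "ess_sep_valued m \<Omega> (v :: 'x \<Rightarrow> 'y::{metric_space,second_countable_topology})"
  unfolding ess_sep_valued_def
proof (intro bexI[of _ "{}"])
  show "separable_space (subtopology euclidean (v ` (\<Omega> - {})))"
    by (intro second_countable_imp_separable_space second_countable_subtopology second_countable_euclidean)
qed simp

lemma borel_esv_iff: "borel_esv m \<Omega> (v :: 'x::topological_space \<Rightarrow> 'y::{metric_space,second_countable_topology})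
    \<longleftrightarrow> v \<in> borel_measurable (restrict_space borel \<Omega>)"
  unfolding borel_esv_def using ess_sep_trivial by blast

lemma tnorm_nonneg:
  assumes c: "cat0 TYPE('y::metric_space)" and v: "v \<in> tcone (y::'y)"
  shows "0 \<le> tnorm y v"
  unfolding tnorm_def by (rule tdist_nonneg[OF c v tzero_tcone])

context
  fixes u :: "'x::topological_space \<Rightarrow> 'y::polish_space" and T :: "'x \<Rightarrow> 'y tvec"
    and \<Omega> :: "'x set" and zs :: "nat \<Rightarrow> 'y"
  assumes c: "cat0 TYPE('y)"
    and dense: "\<And>x \<epsilon>. 0 < \<epsilon> \<Longrightarrow> \<exists>k. dist (zs k) x < \<epsilon>"
    and um: "u \<in> borel_measurable (restrict_space borel \<Omega>)"
    and Tc: "\<And>x. x \<in> \<Omega> \<Longrightarrow> T x \<in> tcone (u x)"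
    and Tm: "\<And>z. (\<lambda>x. tinner (u x) (T x) (tdir 1 (u x) z)) \<in> borel_measurable (restrict_space borel \<Omega>)"
begin

lemma P1:
  assumes vm: "v \<in> borel_measurable (restrict_space borel \<Omega>)"
  shows "(\<lambda>x. tinner (u x) (T x) (tdir 1 (u x) (v x))) \<in> borel_measurable (restrict_space borel \<Omega>)"
proof -
  let ?M = "restrict_space borel \<Omega>"
  define idx where "idx k x = (LEAST j. dist (v x) (zs j) < inverse (real (Suc k)))" for k x
  have im: "idx k \<in> measurable ?M (count_space UNIV)" for k
    unfolding idx_def using vm by measurable
  have fm: "(\<lambda>x. tinner (u x) (T x) (tdir 1 (u x) (zs (idx k x)))) \<in> borel_measurable ?M" for k
    using measurable_compose_countable'[where f = "\<lambda>j x. tinner (u x) (T x) (tdir 1 (u x) (zs j))"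
        and g = "idx k" and I = UNIV and M = ?M and N = borel] Tm im by simp
  have conv: "(\<lambda>k. zs (idx k x)) \<longlonglongrightarrow> v x" for x
  proof -
    have d: "dist (v x) (zs (idx k x)) < inverse (real (Suc k))" for k
    proof -
      obtain j where "dist (zs j) (v x) < inverse (real (Suc k))" using dense[of "inverse (real (Suc k))" "v x"] by auto
      then have "\<exists>j. dist (v x) (zs j) < inverse (real (Suc k))" by (auto simp: dist_commute)
      then show ?thesis unfolding idx_def by (rule LeastI_ex)
    qed
    have "(\<lambda>k. dist (zs (idx k x)) (v x)) \<longlonglongrightarrow> 0"
    proof (rule Lim_null_comparison[OF _ LIMSEQ_inverse_real_of_nat])
      show "\<forall>\<^sub>F k in sequentially. norm (dist (zs (idx k x)) (v x)) \<le> inverse (real (Suc k))"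
        using d by (intro always_eventually allI) (simp add: dist_commute less_imp_le)
    qed
    then show ?thesis using tendsto_dist_iff by blast
  qed
  show ?thesis
  proof (rule borel_measurable_LIMSEQ_real[OF _ fm])
    fix x assume "x \<in> space ?M"
    then have "x \<in> \<Omega>" by (simp add: space_restrict_space)
    then show "(\<lambda>k. tinner (u x) (T x) (tdir 1 (u x) (zs (idx k x)))) \<longlonglongrightarrow> tinner (u x) (T x) (tdir 1 (u x) (v x))"
      by (intro tinner_tdir1_tendsto[OF c Tc conv])
  qed
qed

lemma P2: "(\<lambda>x. tnorm (u x) (T x)) \<in> borel_measurable (restrict_space borel \<Omega>)"
proof -
  let ?M = "restrict_space borel \<Omega>"
  define \<phi> where "\<phi> p x = 2 * real (fst p) * tinner (u x) (T x) (tdir 1 (u x) (zs (snd p)))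
      - (real (fst p))\<^sup>2 * (dist (u x) (zs (snd p)))\<^sup>2" for p :: "nat \<times> nat" and x
  have \<phi>eq: "\<phi> p x = (tnorm (u x) (T x))\<^sup>2 - (tdist (u x) (T x) (tdir (real (fst p)) (u x) (zs (snd p))))\<^sup>2"
    if "x \<in> \<Omega>" for p x
    using tdist_tdir_formula[OF c Tc[OF that], of "real (fst p)" "zs (snd p)"] unfolding \<phi>_def by simp
  have \<phi>le: "\<phi> p x \<le> (tnorm (u x) (T x))\<^sup>2" if "x \<in> \<Omega>" for p x
    using \<phi>eq[OF that, of p] by simp
  have bdd: "bdd_above ((\<lambda>p. \<phi> p x) ` UNIV)" if "x \<in> \<Omega>" for x
    using \<phi>le[OF that] by (intro bdd_aboveI2) auto
  have sup: "(SUP p. \<phi> p x) = (tnorm (u x) (T x))\<^sup>2" if x: "x \<in> \<Omega>" for x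
  proof (rule antisym)
    show "(SUP p. \<phi> p x) \<le> (tnorm (u x) (T x))\<^sup>2" by (rule cSUP_least) (auto simp: \<phi>le[OF x])
    show "(tnorm (u x) (T x))\<^sup>2 \<le> (SUP p. \<phi> p x)"
    proof (rule field_le_epsilon)
      fix e :: real assume e: "0 < e"
      then have se: "0 < sqrt e" by simp
      obtain N where "\<forall>n\<ge>N. \<exists>k. tdist (u x) (T x) (tdir (real n) (u x) (zs k)) < sqrt e"
        using tcone_density[OF c Tc[OF x] dense se] by blast
      then obtain k where k: "tdist (u x) (T x) (tdir (real N) (u x) (zs k)) < sqrt e" by blast
      have nn: "0 \<le> tdist (u x) (T x) (tdir (real N) (u x) (zs k))"
        by (rule tdist_nonneg[OF c Tc[OF x] tdir_tcone[OF c]]) simp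
      have "(tdist (u x) (T x) (tdir (real N) (u x) (zs k)))\<^sup>2 < (sqrt e)\<^sup>2"
        by (rule power_strict_mono[OF k nn]) simp
      then have "(tdist (u x) (T x) (tdir (real N) (u x) (zs k)))\<^sup>2 < e" using e by simp
      then have "(tnorm (u x) (T x))\<^sup>2 \<le> \<phi> (N, k) x + e" using \<phi>eq[OF x, of "(N, k)"] by simp
      also have "\<phi> (N, k) x \<le> (SUP p. \<phi> p x)" by (rule cSUP_upper) (auto simp: bdd[OF x])
      finally show "(tnorm (u x) (T x))\<^sup>2 \<le> (SUP p. \<phi> p x) + e" by simp
    qed
  qed
  have \<phi>m: "\<phi> p \<in> borel_measurable ?M" for p
  proof -
    note [measurable] = Tm um
    show ?thesis unfolding \<phi>_def by measurable
  qed
  have "(\<lambda>x. SUP p. \<phi> p x) \<in> borel_measurable ?M"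
    by (rule borel_measurable_cSUP) (auto simp: \<phi>m bdd space_restrict_space)
  then have "(\<lambda>x. sqrt (SUP p. \<phi> p x)) \<in> borel_measurable ?M" by measurable
  moreover have "sqrt (SUP p. \<phi> p x) = tnorm (u x) (T x)" if "x \<in> space ?M" for x
  proof -
    have x: "x \<in> \<Omega>" using that by (simp add: space_restrict_space)
    show ?thesis unfolding sup[OF x] using tnorm_nonneg[OF c Tc[OF x]] by simp
  qed
  ultimately show ?thesis using measurable_cong by (metis (no_types, lifting))
qed

lemma P3:
  assumes vm: "v \<in> borel_measurable (restrict_space borel \<Omega>)" and al: "0 \<le> \<alpha>"
  shows "(\<lambda>x. tdist (u x) (T x) (tdir \<alpha> (u x) (v x))) \<in> borel_measurable (restrict_space borel \<Omega>)"
proof -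
  let ?M = "restrict_space borel \<Omega>"
  note [measurable] = P1[OF vm] P2 um vm
  have "(\<lambda>x. sqrt ((tnorm (u x) (T x))\<^sup>2 + \<alpha>\<^sup>2 * (dist (u x) (v x))\<^sup>2 - 2 * \<alpha> * tinner (u x) (T x) (tdir 1 (u x) (v x))))
     \<in> borel_measurable ?M" by measurable
  moreover have "sqrt ((tnorm (u x) (T x))\<^sup>2 + \<alpha>\<^sup>2 * (dist (u x) (v x))\<^sup>2 - 2 * \<alpha> * tinner (u x) (T x) (tdir 1 (u x) (v x)))
      = tdist (u x) (T x) (tdir \<alpha> (u x) (v x))" if "x \<in> space ?M" for x
  proof -
    have x: "x \<in> \<Omega>" using that by (simp add: space_restrict_space)
    have "0 \<le> tdist (u x) (T x) (tdir \<alpha> (u x) (v x))"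
      by (rule tdist_nonneg[OF c Tc[OF x] tdir_tcone[OF c al]])
    then show ?thesis unfolding tdist_tdir_formula[OF c Tc[OF x] al, symmetric] by simp
  qed
  ultimately show ?thesis using measurable_cong by (metis (no_types, lifting))
qed

end

context
  fixes u :: "'x::topological_space \<Rightarrow> 'y::polish_space" and T :: "'x \<Rightarrow> 'y tvec"
    and \<Omega> :: "'x set" and zs :: "nat \<Rightarrow> 'y"
  assumes c: "cat0 TYPE('y)"
    and dense: "\<And>x \<epsilon>. 0 < \<epsilon> \<Longrightarrow> \<exists>k. dist (zs k) x < \<epsilon>"
    and um: "u \<in> borel_measurable (restrict_space borel \<Omega>)"
    and Tc: "\<And>x. x \<in> \<Omega> \<Longrightarrow> T x \<in> tcone (u x)"
    and Tm: "\<And>z. (\<lambda>x. tinner (u x) (T x) (tdir 1 (u x) z)) \<in> borel_measurable (restrict_space borel \<Omega>)"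
begin

lemma Pb:
  "\<exists>vs :: nat \<Rightarrow> 'x \<Rightarrow> 'y. (\<forall>n. vs n \<in> borel_measurable (restrict_space borel \<Omega>)) \<and>
     (\<forall>x\<in>\<Omega>. (\<lambda>n. tdist (u x) (tdir (real n) (u x) (vs n x)) (T x)) \<longlonglongrightarrow> 0) \<and>
     (\<forall>n. \<forall>x\<in>\<Omega>. tdist (u x) (tdir (real n) (u x) (vs n x)) (tzero (u x)) \<le> 3 * tnorm (u x) (T x))"
proof -
  let ?M = "restrict_space borel \<Omega>"
  define D where "D n x k = tdist (u x) (T x) (tdir (real n) (u x) (zs k))" for n x k
  define dn where "dn n x = (INF k. D n x k)" for n x
  define C where "C n k x = (D n x k < dn n x + tnorm (u x) (T x) / real (Suc n))" for n k x
  define vs where "vs n x = (if \<exists>k. C n k x then zs (LEAST k. C n k x) else u x)" for n x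
  have Dm: "(\<lambda>x. D n x k) \<in> borel_measurable ?M" for n k
    unfolding D_def by (rule P3[OF c dense um Tc Tm]) auto
  have Dnn: "0 \<le> D n x k" if "x \<in> \<Omega>" for n x k
    unfolding D_def by (rule tdist_nonneg[OF c Tc[OF that] tdir_tcone[OF c]]) simp
  have bddb: "bdd_below (range (D n x))" if "x \<in> \<Omega>" for n x
    using Dnn[OF that] by (intro bdd_belowI2) auto
  have dnm: "dn n \<in> borel_measurable ?M" for n
    unfolding dn_def by (rule borel_measurable_cINF) (auto simp: Dm bddb space_restrict_space)
  have Cm: "Measurable.pred ?M (\<lambda>x. C n k x)" for n k
  proof -
    note [measurable] = Dm dnm P2[OF c dense um Tc Tm]
    show ?thesis unfolding C_def by measurable
  qed
  have vm: "vs n \<in> borel_measurable ?M" for n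
  proof -
    note [measurable] = Cm
    have lm: "(\<lambda>x. LEAST k. C n k x) \<in> measurable ?M (count_space UNIV)" by measurable
    have f: "(\<lambda>x. zs (LEAST k. C n k x)) \<in> borel_measurable ?M"
      using measurable_compose_countable'[where f = "\<lambda>k x. zs k" and g = "\<lambda>x. LEAST k. C n k x"
          and I = UNIV and M = ?M and N = borel] lm by simp
    have s: "{x \<in> space ?M. \<exists>k. C n k x} \<in> sets ?M" by measurable
    show ?thesis unfolding vs_def by (rule measurable_If[OF f um s])
  qed
  have props: "(\<lambda>n. tdist (u x) (tdir (real n) (u x) (vs n x)) (T x)) \<longlonglongrightarrow> 0 \<and>
     (\<forall>n. tdist (u x) (tdir (real n) (u x) (vs n x)) (tzero (u x)) \<le> 3 * tnorm (u x) (T x))"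
    if x: "x \<in> \<Omega>" for x
  proof -
    define y where "y = u x"
    define t where "t = T x"
    have tc: "t \<in> tcone y" unfolding t_def y_def by (rule Tc[OF x])
    have tn: "0 \<le> tnorm y t" by (rule tnorm_nonneg[OF c tc])
    have dle: "dn n x \<le> D n x k" for n k unfolding dn_def by (rule cINF_lower[OF bddb[OF x]]) simp
    have dnn: "0 \<le> dn n x" for n unfolding dn_def by (rule cINF_greatest) (auto simp: Dnn[OF x])
    have dnorm: "dn n x \<le> tnorm y t" for n
    proof (rule field_le_epsilon)
      fix e :: real assume e: "0 < e"
      have e1: "0 < e / real (Suc n)" using e by simp
      obtain k where k: "dist (zs k) y < e / real (Suc n)" using dense[OF e1] by blast
      have "real (Suc n) * dist (zs k) y < real (Suc n) * (e / real (Suc n))"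
        by (rule mult_strict_left_mono[OF k]) simp
      then have "real (Suc n) * dist (zs k) y < e" by simp
      moreover have "real n * dist (zs k) y \<le> real (Suc n) * dist (zs k) y"
        by (intro mult_right_mono) auto
      ultimately have nk: "real n * dist y (zs k) \<le> e" by (simp add: dist_commute)
      have m1: "tdir (real n) y (zs k) \<in> tcone y" by (rule tdir_tcone[OF c]) simp
      have "D n x k \<le> tdist y t (tzero y) + tdist y (tzero y) (tdir (real n) y (zs k))"
        unfolding D_def y_def[symmetric] t_def[symmetric] by (rule tdist_triangle[OF c tc tzero_tcone m1])
      also have "tdist y (tzero y) (tdir (real n) y (zs k)) = real n * dist y (zs k)"
        using tnorm_tdir[OF c, of "real n" y "zs k"] unfolding tnorm_def by (simp add: tdist_sym)
      finally have "D n x k \<le> tnorm y t + e" using nk unfolding tnorm_def by linarith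
      then show "dn n x \<le> tnorm y t + e" using dle[of n k] by linarith
    qed
    have dlim: "(\<lambda>n. dn n x) \<longlonglongrightarrow> 0"
    proof (rule LIMSEQ_I)
      fix r :: real assume r: "0 < r"
      obtain N where N: "\<forall>n\<ge>N. \<exists>k. tdist y t (tdir (real n) y (zs k)) < r"
        using tcone_density[OF c tc dense r] by blast
      show "\<exists>no. \<forall>n\<ge>no. norm (dn n x - 0) < r"
      proof (intro exI[of _ N] allI impI)
        fix n assume "N \<le> n"
        then obtain k where "tdist y t (tdir (real n) y (zs k)) < r" using N by blast
        then have "dn n x < r" using dle[of n k] unfolding D_def y_def t_def by linarith
        then show "norm (dn n x - 0) < r" using dnn[of n] by simp
      qed
    qed
    have bnd: "tdist y (tdir (real n) y (vs n x)) t \<le> dn n x + tnorm y t / real (Suc n)" for n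
    proof (cases "\<exists>k. C n k x")
      case True
      then have "C n (LEAST k. C n k x) x" by (rule LeastI_ex)
      then have "D n x (LEAST k. C n k x) < dn n x + tnorm y t / real (Suc n)"
        unfolding C_def y_def t_def by simp
      moreover have "vs n x = zs (LEAST k. C n k x)" unfolding vs_def using True by simp
      ultimately show ?thesis unfolding D_def y_def t_def by (simp add: tdist_sym)
    next
      case False
      have z: "tnorm y t = 0"
      proof (rule ccontr)
        assume "tnorm y t \<noteq> 0"
        then have "0 < tnorm y t / real (Suc n)" using tn by simp
        then have "Inf (range (D n x)) < dn n x + tnorm y t / real (Suc n)" unfolding dn_def by simp
        then obtain k where "D n x k < dn n x + tnorm y t / real (Suc n)"
          using cInf_less_iff[of "range (D n x)"] bddb[OF x] by auto
        then have "C n k x" unfolding C_def y_def t_def by simp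
        then show False using False by blast
      qed
      have "vs n x = y" unfolding vs_def y_def using False by simp
      then have "tdist y (tdir (real n) y (vs n x)) t = tnorm y t"
        unfolding tnorm_def using tdir_self[OF c] by (simp add: tdist_sym)
      then show ?thesis using z dnn[of n] by simp
    qed
    have conv: "(\<lambda>n. tdist y (tdir (real n) y (vs n x)) t) \<longlonglongrightarrow> 0"
    proof (rule tendsto_sandwich)
      show "\<forall>\<^sub>F n in sequentially. (0::real) \<le> tdist y (tdir (real n) y (vs n x)) t"
        using tdist_nonneg[OF c tdir_tcone[OF c] tc] by (intro always_eventually allI) simp
      show "\<forall>\<^sub>F n in sequentially. tdist y (tdir (real n) y (vs n x)) t \<le> dn n x + tnorm y t * inverse (real (Suc n))"
        using bnd by (intro always_eventually allI) (simp add: divide_inverse)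
      have "(\<lambda>n. tnorm y t * inverse (real (Suc n))) \<longlonglongrightarrow> 0"
        by (rule tendsto_mult_right_zero[OF LIMSEQ_inverse_real_of_nat])
      then show "(\<lambda>n. dn n x + tnorm y t * inverse (real (Suc n))) \<longlonglongrightarrow> 0"
        using tendsto_add[OF dlim] by fastforce
    qed simp
    have nb: "tdist y (tdir (real n) y (vs n x)) (tzero y) \<le> 3 * tnorm y t" for n
    proof -
      have m: "tdir (real n) y (vs n x) \<in> tcone y" by (rule tdir_tcone[OF c]) simp
      have "tdist y (tdir (real n) y (vs n x)) (tzero y) \<le> tdist y (tdir (real n) y (vs n x)) t + tdist y t (tzero y)"
        by (rule tdist_triangle[OF c m tc tzero_tcone])
      moreover have "tnorm y t / real (Suc n) \<le> tnorm y t / 1"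
        using tn by (intro divide_left_mono) auto
      ultimately show ?thesis using bnd[of n] dnorm[of n] unfolding tnorm_def by simp
    qed
    show ?thesis using conv nb unfolding y_def t_def by blast
  qed
  show ?thesis using vm props by blast
qed

end

lemma TG_gens_Pow:
  "({fst -` B \<inter> TG | B. B \<in> sets (borel :: 'y measure)} \<union>
    {(\<lambda>(y, v). tinner y v (tdir 1 y z)) -` A \<inter> TG | z A. A \<in> sets (borel :: real measure)})
   \<subseteq> Pow (TG :: ('y::metric_space \<times> 'y tvec) set)"
  by auto

lemma space_TG: "space (TG_measure :: ('y::metric_space \<times> 'y tvec) measure) = TG"
  unfolding TG_measure_def by (rule space_measure_of[OF TG_gens_Pow])

lemma sets_TG: "sets (TG_measure :: ('y::metric_space \<times> 'y tvec) measure) =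
   sigma_sets TG ({fst -` B \<inter> TG | B. B \<in> sets (borel :: 'y measure)} \<union>
    {(\<lambda>(y, v). tinner y v (tdir 1 y z)) -` A \<inter> TG | z A. A \<in> sets (borel :: real measure)})"
  unfolding TG_measure_def by (rule sets_measure_of[OF TG_gens_Pow])

lemma TG_gen_meas:
  "(\<lambda>(y, v). tinner y v (tdir 1 y z)) \<in> borel_measurable (TG_measure :: ('y::metric_space \<times> 'y tvec) measure)"
proof (rule measurableI)
  fix A :: "real set" assume A: "A \<in> sets borel"
  have "(\<lambda>(y, v). tinner y v (tdir 1 y z)) -` A \<inter> (TG :: ('y \<times> 'y tvec) set) \<in>
     {(\<lambda>(y, v). tinner y v (tdir 1 y z)) -` A \<inter> TG | z A. A \<in> sets (borel :: real measure)}"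
    using A by blast
  then show "(\<lambda>(y, v). tinner y v (tdir 1 y z)) -` A \<inter> space (TG_measure :: ('y \<times> 'y tvec) measure)
      \<in> sets TG_measure"
    unfolding space_TG sets_TG by (intro sigma_sets.Basic) blast
qed simp

lemma borel_section_tcone:
  assumes "borel_section u \<Omega> T" "x \<in> \<Omega>"
  shows "T x \<in> tcone (u x)"
proof -
  have "(x, u x, T x) \<in> space (pullback_measure u \<Omega>)"
    using measurable_space[OF assms(1)[unfolded borel_section_def], of x] assms(2)
    by (simp add: space_restrict_space)
  then show ?thesis unfolding pullback_measure_def pullback_set_def
    by (auto simp: space_restrict_space)
qed

lemma borel_section_tinner:
  assumes "borel_section u \<Omega> (T :: 'x::topological_space \<Rightarrow> 'y::metric_space tvec)"
  shows "(\<lambda>x. tinner (u x) (T x) (tdir 1 (u x) z)) \<in> borel_measurable (restrict_space borel \<Omega>)"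
proof -
  have g: "(\<lambda>p. (\<lambda>(y, v). tinner y v (tdir 1 y z)) (snd p)) \<in> borel_measurable (pullback_measure u \<Omega>)"
    unfolding pullback_measure_def
    by (rule measurable_restrict_space1, rule measurable_compose[OF measurable_snd TG_gen_meas])
  have "(\<lambda>x. (\<lambda>p. (\<lambda>(y, v). tinner y v (tdir 1 y z)) (snd p)) (x, u x, T x)) \<in> borel_measurable (restrict_space borel \<Omega>)"
    by (rule measurable_compose[OF assms[unfolded borel_section_def] g])
  then show ?thesis by simp
qed

lemma borel_section_intro:
  assumes um: "u \<in> borel_measurable (restrict_space borel \<Omega>)"
    and Tc: "\<And>x. x \<in> \<Omega> \<Longrightarrow> T x \<in> tcone (u x)"
    and Tm: "\<And>z. (\<lambda>x. tinner (u x) (T x) (tdir 1 (u x) z)) \<in> borel_measurable (restrict_space borel \<Omega>)"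
  shows "borel_section u \<Omega> (T :: 'x::topological_space \<Rightarrow> 'y::{metric_space,second_countable_topology} tvec)"
  unfolding borel_section_def pullback_measure_def
proof (rule measurable_restrict_space2)
  let ?M = "restrict_space borel \<Omega>"
  show "(\<lambda>x. (x, u x, T x)) \<in> space ?M \<rightarrow> pullback_set u \<Omega>"
    using Tc unfolding pullback_set_def by (auto simp: space_restrict_space)
  have m1: "(\<lambda>x. x) \<in> measurable ?M borel" by (rule measurable_restrict_space1[OF measurable_id])
  have m2: "(\<lambda>x. (u x, T x)) \<in> measurable ?M TG_measure"
    unfolding TG_measure_def
  proof (rule measurable_measure_of[OF TG_gens_Pow])
    show "(\<lambda>x. (u x, T x)) \<in> space ?M \<rightarrow> TG"
      using Tc unfolding TG_def by (auto simp: space_restrict_space)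
    fix G assume "G \<in> {fst -` B \<inter> TG | B. B \<in> sets (borel :: 'y measure)} \<union>
      {(\<lambda>(y, v). tinner y v (tdir 1 y z)) -` A \<inter> TG | z A. A \<in> sets (borel :: real measure)}"
    then show "(\<lambda>x. (u x, T x)) -` G \<inter> space ?M \<in> sets ?M"
    proof (elim UnE CollectE exE conjE)
      fix B :: "'y set" assume G: "G = fst -` B \<inter> TG" and B: "B \<in> sets borel"
      have "(\<lambda>x. (u x, T x)) -` G \<inter> space ?M = u -` B \<inter> space ?M"
        using Tc unfolding G TG_def by (auto simp: space_restrict_space)
      then show ?thesis using measurable_sets[OF um B] by simp
    next
      fix z :: 'y and A :: "real set"
      assume G: "G = (\<lambda>(y, v). tinner y v (tdir 1 y z)) -` A \<inter> TG" and A: "A \<in> sets borel"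
      have "(\<lambda>x. (u x, T x)) -` G \<inter> space ?M = (\<lambda>x. tinner (u x) (T x) (tdir 1 (u x) z)) -` A \<inter> space ?M"
        using Tc unfolding G TG_def by (auto simp: space_restrict_space)
      then show ?thesis using measurable_sets[OF Tm A] by simp
    qed
  qed
  show "(\<lambda>x. (x, u x, T x)) \<in> measurable ?M (borel \<Otimes>\<^sub>M TG_measure)"
    by (rule measurable_Pair[OF m1 m2])
qed

theorem proposition4p8:
  fixes m :: "'x::polish_space measure"
    and ybar :: "'y::polish_space"
    and \<Omega> :: "'x set"
    and u :: "'x \<Rightarrow> 'y"
    and S :: "'x \<Rightarrow> 'y tvec"
  assumes "mm_space m"
    and "cat0 TYPE('y)"
    and "open \<Omega>"
    and "L2_map m \<Omega> ybar u"
    and "\<forall>x\<in>\<Omega>. S x \<in> tcone (u x)"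
  shows "(\<exists>S'. L2_section_rep m \<Omega> u S' \<and> ae_eq_section m \<Omega> u S S') \<longleftrightarrow>
         (\<exists>T. borel_section u \<Omega> T \<and>
              (\<integral>\<^sup>+ x. ennreal ((tnorm (u x) (T x))\<^sup>2) \<partial>(restrict_space m \<Omega>)) < \<infinity> \<and>
              ae_eq_section m \<Omega> u S T)"
proof -
  note mm = assms(1) and c = assms(2) and L2 = assms(4)
  let ?M = "restrict_space borel \<Omega>"
  let ?N = "restrict_space m \<Omega>"
  obtain zs :: "nat \<Rightarrow> 'y" where dense: "\<And>x \<epsilon>. 0 < \<epsilon> \<Longrightarrow> \<exists>k. dist (zs k) x < \<epsilon>"
    using dense_seq_ex by blast
  have um: "u \<in> borel_measurable ?M" using L2 unfolding L2_map_def borel_esv_def by blast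
  have setsN: "sets ?N = sets ?M" using mm unfolding mm_space_def by (intro sets_restrict_space_cong) blast
  have transfer: "f \<in> borel_measurable ?N" if "f \<in> borel_measurable ?M" for f :: "'x \<Rightarrow> ennreal"
    using that measurable_cong_sets[OF setsN refl] by blast
  have spN: "x \<in> \<Omega>" if "x \<in> space ?N" for x using that by (simp add: space_restrict_space)
  show ?thesis
  proof
    assume "\<exists>S'. L2_section_rep m \<Omega> u S' \<and> ae_eq_section m \<Omega> u S S'"
    then obtain S' where rep: "L2_section_rep m \<Omega> u S'" and ae: "ae_eq_section m \<Omega> u S S'" by blast
    have Sc: "\<And>x. x \<in> \<Omega> \<Longrightarrow> S' x \<in> tcone (u x)" using rep unfolding L2_section_rep_def by blast
    have Sa: "\<And>\<alpha> v. 0 \<le> \<alpha> \<Longrightarrow> v \<in> borel_measurable ?M \<Longrightarrow>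
        (\<lambda>x. tdist (u x) (S' x) (tdir \<alpha> (u x) (v x))) \<in> borel_measurable ?M"
      using rep unfolding L2_section_rep_def borel_esv_iff by blast
    obtain \<alpha> :: "nat \<Rightarrow> real" and vs :: "nat \<Rightarrow> 'x \<Rightarrow> 'y" where
      av: "\<forall>n. \<alpha> n \<ge> 0 \<and> borel_esv m \<Omega> (vs n)" and
      sup: "(SUP n. dL2sq m \<Omega> u (\<lambda>x. tdir (\<alpha> n) (u x) (vs n x)) (\<lambda>x. tzero (u x))) < \<infinity>" and
      cv: "\<forall>x\<in>\<Omega>. (\<lambda>n. tdist (u x) (tdir (\<alpha> n) (u x) (vs n x)) (S' x)) \<longlonglongrightarrow> 0"
      using rep unfolding L2_section_rep_def by blast
    have vsm: "vs n \<in> borel_measurable ?M" for n using av unfolding borel_esv_iff by blast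
    have Sm: "(\<lambda>x. tinner (u x) (S' x) (tdir 1 (u x) z)) \<in> borel_measurable ?M" for z
    proof -
      have m0: "(\<lambda>x. tdist (u x) (S' x) (tdir 0 (u x) z)) \<in> borel_measurable ?M"
        using Sa[of 0 "\<lambda>x. z"] by simp
      have m1: "(\<lambda>x. tdist (u x) (S' x) (tdir 1 (u x) z)) \<in> borel_measurable ?M"
        using Sa[of 1 "\<lambda>x. z"] by simp
      note [measurable] = m0 m1 um
      have "(\<lambda>x. ((tdist (u x) (S' x) (tdir 0 (u x) z))\<^sup>2 + (dist (u x) z)\<^sup>2 - (tdist (u x) (S' x) (tdir 1 (u x) z))\<^sup>2) / 2)
          \<in> borel_measurable ?M" by measurable
      moreover have "((tdist (u x) (S' x) (tdir 0 (u x) z))\<^sup>2 + (dist (u x) z)\<^sup>2 - (tdist (u x) (S' x) (tdir 1 (u x) z))\<^sup>2) / 2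
          = tinner (u x) (S' x) (tdir 1 (u x) z)" for x
        unfolding tinner_tdir1[OF c] tdir_zero[OF c] tnorm_def ..
      ultimately show ?thesis by simp
    qed
    have bs: "borel_section u \<Omega> S'" by (rule borel_section_intro[OF um Sc Sm])
    define g where "g n x = ennreal ((tdist (u x) (tdir (\<alpha> n) (u x) (vs n x)) (tzero (u x)))\<^sup>2)" for n x
    have gm: "g n \<in> borel_measurable ?N" for n
    proof -
      note [measurable] = um vsm
      have "(\<lambda>x. ennreal ((\<alpha> n * dist (u x) (vs n x))\<^sup>2)) \<in> borel_measurable ?M" by measurable
      moreover have "g n = (\<lambda>x. ennreal ((\<alpha> n * dist (u x) (vs n x))\<^sup>2))"
        unfolding g_def using tnorm_tdir[OF c, of "\<alpha> n"] av unfolding tnorm_def by (intro ext) simp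
      ultimately have "g n \<in> borel_measurable ?M" by simp
      then show ?thesis by (rule transfer)
    qed
    have glim: "liminf (\<lambda>n. g n x) = ennreal ((tnorm (u x) (S' x))\<^sup>2)" if x: "x \<in> \<Omega>" for x
    proof -
      have m: "\<And>n. tdir (\<alpha> n) (u x) (vs n x) \<in> tcone (u x)" using tdir_tcone[OF c] av by blast
      have "(\<lambda>n. tdist (u x) (tdir (\<alpha> n) (u x) (vs n x)) (tzero (u x)) - tnorm (u x) (S' x)) \<longlonglongrightarrow> 0"
      proof (rule Lim_null_comparison[OF _ cv[rule_format, OF x]])
        show "\<forall>\<^sub>F n in sequentially. norm (tdist (u x) (tdir (\<alpha> n) (u x) (vs n x)) (tzero (u x)) - tnorm (u x) (S' x))
            \<le> tdist (u x) (tdir (\<alpha> n) (u x) (vs n x)) (S' x)"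
        proof (intro always_eventually allI)
          fix n
          have "tdist (u x) (tdir (\<alpha> n) (u x) (vs n x)) (tzero (u x)) \<le> tdist (u x) (tdir (\<alpha> n) (u x) (vs n x)) (S' x) + tdist (u x) (S' x) (tzero (u x))"
            by (rule tdist_triangle[OF c m Sc[OF x] tzero_tcone])
          moreover have "tdist (u x) (S' x) (tzero (u x)) \<le> tdist (u x) (S' x) (tdir (\<alpha> n) (u x) (vs n x)) + tdist (u x) (tdir (\<alpha> n) (u x) (vs n x)) (tzero (u x))"
            by (rule tdist_triangle[OF c Sc[OF x] m tzero_tcone])
          ultimately show "norm (tdist (u x) (tdir (\<alpha> n) (u x) (vs n x)) (tzero (u x)) - tnorm (u x) (S' x))
            \<le> tdist (u x) (tdir (\<alpha> n) (u x) (vs n x)) (S' x)"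
            unfolding tnorm_def by (simp add: tdist_sym abs_le_iff)
        qed
      qed
      then have "(\<lambda>n. tdist (u x) (tdir (\<alpha> n) (u x) (vs n x)) (tzero (u x))) \<longlonglongrightarrow> tnorm (u x) (S' x)"
        by (rule LIM_zero_cancel)
      then have "(\<lambda>n. g n x) \<longlonglongrightarrow> ennreal ((tnorm (u x) (S' x))\<^sup>2)"
        unfolding g_def by (intro tendsto_ennrealI tendsto_power)
      then show ?thesis by (intro lim_imp_Liminf) simp
    qed
    have "(\<integral>\<^sup>+ x. ennreal ((tnorm (u x) (S' x))\<^sup>2) \<partial>?N) = (\<integral>\<^sup>+ x. liminf (\<lambda>n. g n x) \<partial>?N)"
      by (rule nn_integral_cong) (simp add: glim spN)
    also have "\<dots> \<le> liminf (\<lambda>n. integral\<^sup>N ?N (g n))" by (rule nn_integral_liminf[OF gm])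
    also have "\<dots> \<le> (SUP n. integral\<^sup>N ?N (g n))"
      unfolding liminf_SUP_INF by (intro SUP_mono) (auto intro: INF_lower)
    also have "\<dots> = (SUP n. dL2sq m \<Omega> u (\<lambda>x. tdir (\<alpha> n) (u x) (vs n x)) (\<lambda>x. tzero (u x)))"
      unfolding dL2sq_def g_def by simp
    also have "\<dots> < \<infinity>" by (rule sup)
    finally have fin: "(\<integral>\<^sup>+ x. ennreal ((tnorm (u x) (S' x))\<^sup>2) \<partial>?N) < \<infinity>" .
    show "\<exists>T. borel_section u \<Omega> T \<and> (\<integral>\<^sup>+ x. ennreal ((tnorm (u x) (T x))\<^sup>2) \<partial>?N) < \<infinity> \<and>
              ae_eq_section m \<Omega> u S T"
      using bs fin ae by blast
  next
    assume "\<exists>T. borel_section u \<Omega> T \<and> (\<integral>\<^sup>+ x. ennreal ((tnorm (u x) (T x))\<^sup>2) \<partial>?N) < \<infinity> \<and>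
              ae_eq_section m \<Omega> u S T"
    then obtain T where bs: "borel_section u \<Omega> T"
      and fin: "(\<integral>\<^sup>+ x. ennreal ((tnorm (u x) (T x))\<^sup>2) \<partial>?N) < \<infinity>"
      and ae: "ae_eq_section m \<Omega> u S T" by blast
    have Tc: "\<And>x. x \<in> \<Omega> \<Longrightarrow> T x \<in> tcone (u x)" using borel_section_tcone[OF bs] by blast
    have Tm: "\<And>z. (\<lambda>x. tinner (u x) (T x) (tdir 1 (u x) z)) \<in> borel_measurable ?M"
      using borel_section_tinner[OF bs] by blast
    obtain vs :: "nat \<Rightarrow> 'x \<Rightarrow> 'y" where vsm: "\<forall>n. vs n \<in> borel_measurable ?M"
      and cv: "\<forall>x\<in>\<Omega>. (\<lambda>n. tdist (u x) (tdir (real n) (u x) (vs n x)) (T x)) \<longlonglongrightarrow> 0"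
      and nb: "\<forall>n. \<forall>x\<in>\<Omega>. tdist (u x) (tdir (real n) (u x) (vs n x)) (tzero (u x)) \<le> 3 * tnorm (u x) (T x)"
      using Pb[OF c dense um Tc Tm] by blast
    have tnm: "(\<lambda>x. ennreal ((tnorm (u x) (T x))\<^sup>2)) \<in> borel_measurable ?N"
    proof -
      note [measurable] = P2[OF c dense um Tc Tm]
      have "(\<lambda>x. ennreal ((tnorm (u x) (T x))\<^sup>2)) \<in> borel_measurable ?M" by measurable
      then show ?thesis by (rule transfer)
    qed
    have bound: "dL2sq m \<Omega> u (\<lambda>x. tdir (real n) (u x) (vs n x)) (\<lambda>x. tzero (u x))
        \<le> ennreal 9 * (\<integral>\<^sup>+ x. ennreal ((tnorm (u x) (T x))\<^sup>2) \<partial>?N)" for n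
    proof -
      have "dL2sq m \<Omega> u (\<lambda>x. tdir (real n) (u x) (vs n x)) (\<lambda>x. tzero (u x))
          \<le> (\<integral>\<^sup>+ x. ennreal 9 * ennreal ((tnorm (u x) (T x))\<^sup>2) \<partial>?N)"
        unfolding dL2sq_def
      proof (rule nn_integral_mono)
        fix x assume "x \<in> space ?N"
        then have x: "x \<in> \<Omega>" by (rule spN)
        have a0: "0 \<le> tdist (u x) (tdir (real n) (u x) (vs n x)) (tzero (u x))"
          by (rule tdist_nonneg[OF c tdir_tcone[OF c] tzero_tcone]) simp
        have "(tdist (u x) (tdir (real n) (u x) (vs n x)) (tzero (u x)))\<^sup>2 \<le> (3 * tnorm (u x) (T x))\<^sup>2"
          by (rule power_mono[OF nb[rule_format, OF x] a0])
        then have "(tdist (u x) (tdir (real n) (u x) (vs n x)) (tzero (u x)))\<^sup>2 \<le> 9 * (tnorm (u x) (T x))\<^sup>2"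
          by (simp add: power_mult_distrib)
        then have e1: "ennreal ((tdist (u x) (tdir (real n) (u x) (vs n x)) (tzero (u x)))\<^sup>2)
            \<le> ennreal (9 * (tnorm (u x) (T x))\<^sup>2)" by (rule ennreal_leI)
        have e2: "ennreal (9 * (tnorm (u x) (T x))\<^sup>2) = ennreal 9 * ennreal ((tnorm (u x) (T x))\<^sup>2)"
          by (rule ennreal_mult) auto
        show "ennreal ((tdist (u x) (tdir (real n) (u x) (vs n x)) (tzero (u x)))\<^sup>2)
            \<le> ennreal 9 * ennreal ((tnorm (u x) (T x))\<^sup>2)"
          using e1 unfolding e2 .
      qed
      also have "\<dots> = ennreal 9 * (\<integral>\<^sup>+ x. ennreal ((tnorm (u x) (T x))\<^sup>2) \<partial>?N)"
        by (rule nn_integral_cmult[OF tnm])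
      finally show ?thesis .
    qed
    have sup: "(SUP n. dL2sq m \<Omega> u (\<lambda>x. tdir (real n) (u x) (vs n x)) (\<lambda>x. tzero (u x))) < \<infinity>"
    proof -
      have "(SUP n. dL2sq m \<Omega> u (\<lambda>x. tdir (real n) (u x) (vs n x)) (\<lambda>x. tzero (u x)))
          \<le> ennreal 9 * (\<integral>\<^sup>+ x. ennreal ((tnorm (u x) (T x))\<^sup>2) \<partial>?N)"
        by (rule SUP_least) (rule bound)
      also have "\<dots> < \<infinity>" using fin by (simp add: ennreal_mult_less_top)
      finally show ?thesis .
    qed
    have rep: "L2_section_rep m \<Omega> u T"
      unfolding L2_section_rep_def
    proof (intro conjI allI impI ballI)
      show "\<And>x. x \<in> \<Omega> \<Longrightarrow> T x \<in> tcone (u x)" by (rule Tc)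
      fix \<alpha> :: real and v :: "'x \<Rightarrow> 'y" assume "0 \<le> \<alpha>" "borel_esv m \<Omega> v"
      then show "(\<lambda>x. tdist (u x) (T x) (tdir \<alpha> (u x) (v x))) \<in> borel_measurable ?M"
        using P3[OF c dense um Tc Tm] unfolding borel_esv_iff by blast
    next
      show "\<exists>(\<alpha> :: nat \<Rightarrow> real) (vs :: nat \<Rightarrow> 'x \<Rightarrow> 'y).
        (\<forall>n. \<alpha> n \<ge> 0 \<and> borel_esv m \<Omega> (vs n)) \<and>
        (SUP n. dL2sq m \<Omega> u (\<lambda>x. tdir (\<alpha> n) (u x) (vs n x)) (\<lambda>x. tzero (u x))) < \<infinity> \<and>
        (\<forall>x\<in>\<Omega>. (\<lambda>n. tdist (u x) (tdir (\<alpha> n) (u x) (vs n x)) (T x)) \<longlonglongrightarrow> 0)"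
        using vsm sup cv unfolding borel_esv_iff by (intro exI[of _ real] exI[of _ vs]) auto
    qed
    show "\<exists>S'. L2_section_rep m \<Omega> u S' \<and> ae_eq_section m \<Omega> u S S'" using rep ae by blast
  qed
qed

end
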